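(* Let $\mathcal{H}_A,\mathcal{H}_B$ be finite-dimensional Hilbert spaces, let $|\Psi\rangle,|\Phi\rangle\in\mathcal{H}_A\otimes\mathcal{H}_B$ be unit vectors (not necessarily orthogonal), and let $\alpha,\beta\in\mathbb{C}$ with $|\alpha|^2+|\beta|^2=1$ such that $|\Gamma\rangle=\alpha|\Psi\rangle+\beta|\Phi\rangle\neq0$. Then for every $t\in(0,1)$, $$\big\|\,|\Gamma\rangle\big\|^2\,E(\Gamma)\le f(t),\qquad f(t)=\frac{t|\beta|^2+(1-t)|\alpha|^2}{t(1-t)}\Big[tE(\Psi)+(1-t)E(\Phi)+h_2(t)\Big].$$
   Context: $S(\rho)=-\mathrm{Tr}(\rho\log\rho)$ is the von Neumann entropy (logarithm base 2). For a nonzero vector $|\chi\rangle\in\mathcal{H}_A\otimes\mathcal{H}_B$, its entanglement is $E(\chi)=S\big(\mathrm{Tr}_B|\chi\rangle\langle\chi|/\langle\chi|\chi\rangle\big)$, i.e. the entropy of entanglement of the normalized vector. $h_2(x)=-x\log x-(1-x)\log(1-x)$ is the binary entropy function. *)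

theory Defs
  imports "Jordan_Normal_Form.Char_Poly"
begin

definition eta2 :: "real \<Rightarrow> real" where
  "eta2 x = (if x \<le> 0 then 0 else x * log 2 x)"

definition h2 :: "real \<Rightarrow> real" where
  "h2 x = - x * log 2 x - (1 - x) * log 2 (1 - x)"

definition eigvals_list :: "complex mat \<Rightarrow> complex list" where
  "eigvals_list A = (SOME es. char_poly A = (\<Prod>a\<leftarrow>es. [:- a, 1:]))"

(* von Neumann entropy S(rho) = - Tr(rho log2 rho) = - sum of lambda log2 lambda over eigenvalues *)
definition vn_entropy :: "complex mat \<Rightarrow> real" where
  "vn_entropy \<rho> = - (\<Sum>x\<leftarrow>eigvals_list \<rho>. eta2 (Re x))"

(* H_A = C^dA, H_B = C^dB, H_A \<otimes> H_B = C^(dA*dB) with |i>\<otimes>|j> = e_(i*dB+j) *)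
definition outer :: "complex vec \<Rightarrow> complex mat" where
  "outer v = mat (dim_vec v) (dim_vec v) (\<lambda>(k, l). v $ k * cnj (v $ l))"

definition ptrace_B :: "nat \<Rightarrow> nat \<Rightarrow> complex mat \<Rightarrow> complex mat" where
  "ptrace_B dA dB X = mat dA dA (\<lambda>(i, i'). \<Sum>j<dB. X $$ (i * dB + j, i' * dB + j))"

definition vnorm2 :: "complex vec \<Rightarrow> real" where
  "vnorm2 v = (\<Sum>k<dim_vec v. (cmod (v $ k))\<^sup>2)"

definition ent :: "nat \<Rightarrow> nat \<Rightarrow> complex vec \<Rightarrow> real" where
  "ent dA dB \<chi> = vn_entropy (ptrace_B dA dB (complex_of_real (1 / vnorm2 \<chi>) \<cdot>\<^sub>m outer \<chi>))"

end

theory Submission imports Defs "Jordan_Normal_Form.Schur_Decomposition" begin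


definition etan :: "real \<Rightarrow> real" where "etan x = (if x \<le> 0 then 0 else x * ln x)"

lemma etan_0[simp]: "etan 0 = 0" unfolding etan_def by simp

lemma ln_ge: "(x::real) > 0 \<Longrightarrow> ln x \<ge> 1 - 1/x"
proof -
  assume x: "x > 0"
  have "ln (1/x) \<le> 1/x - 1" using x by (intro ln_le_minus_one) auto
  thus ?thesis using x by (simp add: ln_div)
qed

lemma ln_quot_ge: "(a::real) > 0 \<Longrightarrow> b > 0 \<Longrightarrow> a * (ln a - ln b) \<ge> a - b"
proof -
  assume a: "a > 0" and b: "b > 0"
  have "ln (a/b) \<ge> 1 - b/a" using ln_ge[of "a/b"] a b by simp
  hence "a * ln (a/b) \<ge> a * (1 - b/a)" using a by (intro mult_left_mono) auto
  thus ?thesis using a b by (simp add: ln_div algebra_simps)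
qed

lemma J1: "(l::real) \<ge> 0 \<Longrightarrow> m > 0 \<Longrightarrow> etan l - l * ln m \<ge> l - m"
  using ln_quot_ge[of l m] by (cases "l = 0") (auto simp: etan_def algebra_simps)

lemma jensen_etan:
  assumes K: "finite K" and D: "\<And>k. k \<in> K \<Longrightarrow> D k \<ge> 0" and D1: "sum D K = 1"
    and l: "\<And>k. k \<in> K \<Longrightarrow> l k \<ge> 0"
  shows "etan (\<Sum>k\<in>K. D k * l k) \<le> (\<Sum>k\<in>K. D k * etan (l k))"
proof -
  define m where "m = (\<Sum>k\<in>K. D k * l k)"
  have m0: "m \<ge> 0" unfolding m_def using D l by (auto intro: sum_nonneg)
  show ?thesis
  proof (cases "m = 0")
    case True
    hence "\<forall>k\<in>K. D k * l k = 0" using sum_nonneg_eq_0_iff[OF K, of "\<lambda>k. D k * l k"] D l unfolding m_def by auto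
    hence "\<forall>k\<in>K. D k * etan (l k) = 0" by (metis etan_0 mult_eq_0_iff)
    hence "(\<Sum>k\<in>K. D k * etan (l k)) = 0" by (intro sum.neutral) auto
    thus ?thesis using True unfolding m_def by simp
  next
    case False
    hence mp: "m > 0" using m0 by auto
    have "(\<Sum>k\<in>K. D k * (l k - m)) \<le> (\<Sum>k\<in>K. D k * (etan (l k) - l k * ln m))"
      by (rule sum_mono, rule mult_left_mono, insert J1 l D mp, auto)
    also have "(\<Sum>k\<in>K. D k * (l k - m)) = m - m"
      using D1 by (simp add: right_diff_distrib sum_subtractf sum_distrib_right[symmetric] m_def)
    also have "(\<Sum>k\<in>K. D k * (etan (l k) - l k * ln m)) = (\<Sum>k\<in>K. D k * etan (l k)) - m * ln m"
      by (simp add: right_diff_distrib sum_subtractf sum_distrib_right m_def mult.assoc)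
    finally show ?thesis using mp unfolding m_def[symmetric] by (simp add: etan_def)
  qed
qed

lemma dstoch_etan:
  assumes J: "finite J" and K: "finite K" and D: "\<And>j k. j \<in> J \<Longrightarrow> k \<in> K \<Longrightarrow> D j k \<ge> 0"
    and R: "\<And>j. j \<in> J \<Longrightarrow> (\<Sum>k\<in>K. D j k) = 1" and C: "\<And>k. k \<in> K \<Longrightarrow> (\<Sum>j\<in>J. D j k) = 1"
    and l: "\<And>k. k \<in> K \<Longrightarrow> l k \<ge> 0"
  shows "(\<Sum>j\<in>J. etan (\<Sum>k\<in>K. D j k * l k)) \<le> (\<Sum>k\<in>K. etan (l k))"
proof -
  have "(\<Sum>j\<in>J. etan (\<Sum>k\<in>K. D j k * l k)) \<le> (\<Sum>j\<in>J. \<Sum>k\<in>K. D j k * etan (l k))"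
    by (rule sum_mono, rule jensen_etan, insert K D R l, auto)
  also have "\<dots> = (\<Sum>k\<in>K. (\<Sum>j\<in>J. D j k) * etan (l k))"
    by (subst sum.swap) (simp add: sum_distrib_right)
  also have "\<dots> = (\<Sum>k\<in>K. etan (l k))" using C by simp
  finally show ?thesis .
qed

lemma etan_sum_le:
  assumes K: "finite K" and l: "\<And>k. k \<in> K \<Longrightarrow> l k \<ge> 0"
  shows "(\<Sum>k\<in>K. etan (l k)) \<le> etan (\<Sum>k\<in>K. l k)"
proof -
  define m where "m = (\<Sum>k\<in>K. l k)"
  have m0: "m \<ge> 0" unfolding m_def using l by (auto intro: sum_nonneg)
  show ?thesis
  proof (cases "m = 0")
    case True
    hence "\<forall>k\<in>K. l k = 0" using sum_nonneg_eq_0_iff[OF K, of l] l unfolding m_def by auto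
    thus ?thesis using True unfolding m_def by simp
  next
    case False
    hence mp: "m > 0" using m0 by auto
    have "(\<Sum>k\<in>K. etan (l k)) \<le> (\<Sum>k\<in>K. l k * ln m)"
    proof (rule sum_mono)
      fix k assume k: "k \<in> K"
      have lm: "l k \<le> m" unfolding m_def by (rule member_le_sum[OF k _ K], insert l, auto)
      show "etan (l k) \<le> l k * ln m"
      proof (cases "l k = 0")
        case False
        hence "l k > 0" using l k by force
        thus ?thesis using lm mp by (auto simp: etan_def intro!: mult_left_mono)
      qed (simp add: etan_def)
    qed
    also have "\<dots> = etan m" using mp by (simp add: etan_def m_def sum_distrib_right)
    finally show ?thesis unfolding m_def .
  qed
qed

lemma concave_term:
  assumes a: "a \<ge> 0" and b: "b \<ge> 0" and x: "x > 0" and y: "y > 0"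
  shows "etan (a + b) - etan a - etan b \<le> - (a * (ln x - ln (x+y)) + b * (ln y - ln (x+y)))"
proof -
  have lx: "ln x - ln (x+y) \<le> 0" and ly: "ln y - ln (x+y) \<le> 0" using x y by auto
  consider "a = 0" | "b = 0" | "a > 0 \<and> b > 0" using a b by force
  thus ?thesis
  proof cases
    case 1 thus ?thesis using b ly by (simp add: mult_nonneg_nonpos)
  next
    case 2 thus ?thesis using a lx by (simp add: mult_nonneg_nonpos)
  next
    case 3
    hence ap: "a > 0" and bp: "b > 0" by auto
    define s where "s = a + b"
    have sp: "s > 0" using ap bp s_def by auto
    have 1: "a * (ln a - ln (s * (x/(x+y)))) \<ge> a - s * (x/(x+y))"
      by (rule ln_quot_ge, insert ap sp x y, auto)
    have 2: "b * (ln b - ln (s * (y/(x+y)))) \<ge> b - s * (y/(x+y))"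
      by (rule ln_quot_ge, insert bp sp x y, auto)
    have e1: "ln (s * (x/(x+y))) = ln s + ln x - ln (x+y)" using sp x y by (simp add: ln_mult ln_div)
    have e2: "ln (s * (y/(x+y))) = ln s + ln y - ln (x+y)" using sp x y by (simp add: ln_mult ln_div)
    have e3: "s * (x/(x+y)) + s * (y/(x+y)) = s" using x y by (simp add: add_divide_distrib[symmetric] distrib_left[symmetric])
    have h1: "a * ln a - a * ln s - a * ln x + a * ln (x+y) \<ge> a - s * (x/(x+y))"
      using 1 unfolding e1 by (simp add: algebra_simps)
    have h2: "b * ln b - b * ln s - b * ln y + b * ln (x+y) \<ge> b - s * (y/(x+y))"
      using 2 unfolding e2 by (simp add: algebra_simps)
    have h4: "s * ln s = a * ln s + b * ln s" unfolding s_def by (simp add: algebra_simps)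
    have "etan (a + b) - etan a - etan b = s * ln s - a * ln a - b * ln b"
      using ap bp sp unfolding s_def etan_def by auto
    thus ?thesis using h1 h2 e3 h4 s_def by (simp add: algebra_simps)
  qed
qed

lemma concave_etan:
  assumes J: "finite J" and a: "\<And>j. j \<in> J \<Longrightarrow> a j \<ge> 0" and b: "\<And>j. j \<in> J \<Longrightarrow> b j \<ge> 0"
  shows "(\<Sum>j\<in>J. etan (a j + b j) - etan (a j) - etan (b j))
    \<le> etan (sum a J + sum b J) - etan (sum a J) - etan (sum b J)"
proof -
  define x where "x = sum a J"
  define y where "y = sum b J"
  have x0: "x \<ge> 0" and y0: "y \<ge> 0" unfolding x_def y_def using a b by (auto intro: sum_nonneg)
  consider "x = 0" | "y = 0" | "x > 0 \<and> y > 0" using x0 y0 by force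
  thus ?thesis
  proof cases
    case 1
    hence "\<forall>j\<in>J. a j = 0" using sum_nonneg_eq_0_iff[OF J, of a] a unfolding x_def by auto
    thus ?thesis using 1 unfolding x_def by simp
  next
    case 2
    hence "\<forall>j\<in>J. b j = 0" using sum_nonneg_eq_0_iff[OF J, of b] b unfolding y_def by auto
    thus ?thesis using 2 unfolding y_def by simp
  next
    case 3
    hence xp: "x > 0" and yp: "y > 0" by auto
    have "(\<Sum>j\<in>J. etan (a j + b j) - etan (a j) - etan (b j))
       \<le> (\<Sum>j\<in>J. - (a j * (ln x - ln (x+y)) + b j * (ln y - ln (x+y))))"
      by (rule sum_mono, rule concave_term, insert a b xp yp, auto)
    also have "\<dots> = - (x * (ln x - ln (x+y)) + y * (ln y - ln (x+y)))"
      unfolding x_def y_def by (simp add: sum.distrib sum_distrib_right sum_negf sum_subtractf)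
    also have "\<dots> = etan (x + y) - etan x - etan y" using xp yp by (simp add: etan_def algebra_simps)
    finally show ?thesis unfolding x_def y_def .
  qed
qed

lemma subadd_comp:
  assumes J: "finite J" and c: "\<And>j. j \<in> J \<Longrightarrow> c j \<ge> 0" and c1: "sum c J = 1"
    and lam: "lam \<ge> 0" and nu: "\<And>j. j \<in> J \<Longrightarrow> nu j \<ge> 0"
    and cond: "lam > 0 \<Longrightarrow> (\<forall>j\<in>J. nu j = 0 \<longrightarrow> c j = 0) \<and> lam * (\<Sum>j\<in>J. c j / nu j) \<le> 1"
  shows "lam * (\<Sum>j\<in>J. c j * (if nu j > 0 then ln (nu j) else 0)) \<ge> etan lam"
proof (cases "lam = 0")
  case True thus ?thesis by simp
next
  case False
  hence lp: "lam > 0" using lam by auto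
  from cond[OF lp] have z: "\<forall>j\<in>J. nu j = 0 \<longrightarrow> c j = 0" and s: "lam * (\<Sum>j\<in>J. c j / nu j) \<le> 1" by auto
  have "(\<Sum>j\<in>J. c j * (ln lam + 1) - lam * (c j / nu j)) \<le> (\<Sum>j\<in>J. c j * (if nu j > 0 then ln (nu j) else 0))"
  proof (rule sum_mono)
    fix j assume j: "j \<in> J"
    show "c j * (ln lam + 1) - lam * (c j / nu j) \<le> c j * (if nu j > 0 then ln (nu j) else 0)"
    proof (cases "nu j > 0")
      case True
      have "nu j * (ln (nu j) - ln lam) \<ge> nu j - lam" by (rule ln_quot_ge[OF True lp])
      hence "ln (nu j) \<ge> ln lam + 1 - lam / nu j" using True by (simp add: field_simps)
      hence "c j * ln (nu j) \<ge> c j * (ln lam + 1 - lam / nu j)" using c j by (intro mult_left_mono) auto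
      thus ?thesis using True by (simp add: algebra_simps)
    next
      case False
      hence "nu j = 0" using nu j by force
      thus ?thesis using z j by auto
    qed
  qed
  also have "(\<Sum>j\<in>J. c j * (ln lam + 1) - lam * (c j / nu j)) = (ln lam + 1) - lam * (\<Sum>j\<in>J. c j / nu j)"
    using c1 by (simp add: sum_subtractf sum_distrib_right[symmetric] sum_distrib_left)
  finally have "ln lam \<le> (\<Sum>j\<in>J. c j * (if nu j > 0 then ln (nu j) else 0))" using s by simp
  hence "lam * ln lam \<le> lam * (\<Sum>j\<in>J. c j * (if nu j > 0 then ln (nu j) else 0))" using lp by (intro mult_left_mono) auto
  thus ?thesis using lp by (simp add: etan_def)
qed

lemma subadd_etan:
  assumes J: "finite J" and K: "finite K" and L: "finite L"
    and c: "\<And>j k. j \<in> J \<Longrightarrow> k \<in> K \<Longrightarrow> c j k \<ge> 0" and c1: "\<And>k. k \<in> K \<Longrightarrow> (\<Sum>j\<in>J. c j k) = 1"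
    and d: "\<And>j k. j \<in> J \<Longrightarrow> k \<in> L \<Longrightarrow> d j k \<ge> 0" and d1: "\<And>k. k \<in> L \<Longrightarrow> (\<Sum>j\<in>J. d j k) = 1"
    and lam: "\<And>k. k \<in> K \<Longrightarrow> lam k \<ge> 0" and kap: "\<And>k. k \<in> L \<Longrightarrow> kap k \<ge> 0"
    and nu: "\<And>j. j \<in> J \<Longrightarrow> nu j = (\<Sum>k\<in>K. lam k * c j k) + (\<Sum>k\<in>L. kap k * d j k)"
    and condc: "\<And>k. k \<in> K \<Longrightarrow> lam k > 0 \<Longrightarrow> (\<forall>j\<in>J. nu j = 0 \<longrightarrow> c j k = 0) \<and> lam k * (\<Sum>j\<in>J. c j k / nu j) \<le> 1"
    and condd: "\<And>k. k \<in> L \<Longrightarrow> kap k > 0 \<Longrightarrow> (\<forall>j\<in>J. nu j = 0 \<longrightarrow> d j k = 0) \<and> kap k * (\<Sum>j\<in>J. d j k / nu j) \<le> 1"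
  shows "(\<Sum>k\<in>K. etan (lam k)) + (\<Sum>k\<in>L. etan (kap k)) \<le> (\<Sum>j\<in>J. etan (nu j))"
proof -
  define Lg where "Lg j = (if nu j > 0 then ln (nu j) else 0)" for j
  have nu0: "nu j \<ge> 0" if "j \<in> J" for j
    unfolding nu[OF that] using lam kap c d that by (auto intro!: add_nonneg_nonneg sum_nonneg)
  have "(\<Sum>k\<in>K. etan (lam k)) \<le> (\<Sum>k\<in>K. lam k * (\<Sum>j\<in>J. c j k * Lg j))"
  proof (rule sum_mono)
    fix k assume k: "k \<in> K"
    show "etan (lam k) \<le> lam k * (\<Sum>j\<in>J. c j k * Lg j)"
      unfolding Lg_def by (rule subadd_comp[OF J c[OF _ k] c1[OF k] lam[OF k] nu0 condc[OF k]])
  qed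
  moreover have "(\<Sum>k\<in>L. etan (kap k)) \<le> (\<Sum>k\<in>L. kap k * (\<Sum>j\<in>J. d j k * Lg j))"
  proof (rule sum_mono)
    fix k assume k: "k \<in> L"
    show "etan (kap k) \<le> kap k * (\<Sum>j\<in>J. d j k * Lg j)"
      unfolding Lg_def by (rule subadd_comp[OF J d[OF _ k] d1[OF k] kap[OF k] nu0 condd[OF k]])
  qed
  moreover have "(\<Sum>k\<in>K. lam k * (\<Sum>j\<in>J. c j k * Lg j)) + (\<Sum>k\<in>L. kap k * (\<Sum>j\<in>J. d j k * Lg j))
     = (\<Sum>j\<in>J. nu j * Lg j)"
  proof -
    have "(\<Sum>j\<in>J. nu j * Lg j) = (\<Sum>j\<in>J. (\<Sum>k\<in>K. lam k * c j k * Lg j) + (\<Sum>k\<in>L. kap k * d j k * Lg j))"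
      by (intro sum.cong refl) (simp only: nu distrib_right sum_distrib_right)
    also have "\<dots> = (\<Sum>j\<in>J. \<Sum>k\<in>K. lam k * c j k * Lg j) + (\<Sum>j\<in>J. \<Sum>k\<in>L. kap k * d j k * Lg j)"
      by (rule sum.distrib)
    also have "(\<Sum>j\<in>J. \<Sum>k\<in>K. lam k * c j k * Lg j) = (\<Sum>k\<in>K. lam k * (\<Sum>j\<in>J. c j k * Lg j))"
      by (subst sum.swap) (simp only: sum_distrib_left mult.assoc)
    also have "(\<Sum>j\<in>J. \<Sum>k\<in>L. kap k * d j k * Lg j) = (\<Sum>k\<in>L. kap k * (\<Sum>j\<in>J. d j k * Lg j))"
      by (subst sum.swap) (simp only: sum_distrib_left mult.assoc)
    finally show ?thesis by simp
  qed
  moreover have "(\<Sum>j\<in>J. nu j * Lg j) = (\<Sum>j\<in>J. etan (nu j))"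
    by (rule sum.cong, insert nu0, auto simp: Lg_def etan_def)
  ultimately show ?thesis by linarith
qed



definition adj :: "complex mat \<Rightarrow> complex mat" where
  "adj A = mat (dim_col A) (dim_row A) (\<lambda>(i,j). cnj (A $$ (j,i)))"

lemma adj_carrier[simp]: "A \<in> carrier_mat n m \<Longrightarrow> adj A \<in> carrier_mat m n"
  unfolding adj_def by auto
lemma adj_dims[simp]: "dim_row (adj A) = dim_col A" "dim_col (adj A) = dim_row A"
  unfolding adj_def by auto
lemma adj_index[simp]: "i < dim_col A \<Longrightarrow> j < dim_row A \<Longrightarrow> adj A $$ (i,j) = cnj (A $$ (j,i))"
  unfolding adj_def by auto
lemma adj_adj[simp]: "adj (adj A) = A" by (rule eq_matI) auto
lemma adj_mult: "A \<in> carrier_mat n m \<Longrightarrow> B \<in> carrier_mat m k \<Longrightarrow> adj (A * B) = adj B * adj A"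
  by (rule eq_matI) (auto simp: scalar_prod_def mult.commute cnj_sum intro!: sum.cong)
lemma adj_one[simp]: "adj (1\<^sub>m n) = 1\<^sub>m n" by (rule eq_matI) auto
lemma adj_zero[simp]: "adj (0\<^sub>m n m) = 0\<^sub>m m n" by (rule eq_matI) auto
lemma adj_four_block_diag: assumes "A \<in> carrier_mat n n" "D \<in> carrier_mat m m"
  shows "adj (four_block_mat A (0\<^sub>m n m) (0\<^sub>m m n) D) = four_block_mat (adj A) (0\<^sub>m n m) (0\<^sub>m m n) (adj D)"
  by (rule eq_matI) (insert assms, auto simp: four_block_mat_def)

definition nrm :: "complex vec \<Rightarrow> complex vec" where
  "nrm v = complex_of_real (1 / sqrt (\<Sum>i<dim_vec v. (cmod (v $ i))\<^sup>2)) \<cdot>\<^sub>v v"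

lemma sprod_c_real: "v \<bullet>c v = complex_of_real (\<Sum>i<dim_vec v. (cmod (v $ i))\<^sup>2)"
  unfolding scalar_prod_def
  by (auto simp: lessThan_atLeast0 intro!: sum.cong) (metis complex_norm_square of_real_power)

lemma smult_sprod_c: assumes "v \<in> carrier_vec n" "w \<in> carrier_vec n"
  shows "(complex_of_real a \<cdot>\<^sub>v v) \<bullet>c (complex_of_real b \<cdot>\<^sub>v w) = complex_of_real (a*b) * (v \<bullet>c w)"
  using assms unfolding scalar_prod_def
  by (auto simp: sum_distrib_left intro!: sum.cong)

lemma nrm_props: assumes v: "v \<in> carrier_vec n" and v0: "v \<noteq> 0\<^sub>v n"
  shows "nrm v \<in> carrier_vec n" "nrm v \<bullet>c nrm v = 1" "nrm v \<noteq> 0\<^sub>v n"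
proof -
  define s where "s = (\<Sum>i<dim_vec v. (cmod (v $ i))\<^sup>2)"
  have vv: "v \<bullet>c v = complex_of_real s" using sprod_c_real s_def by auto
  have "v \<bullet>c v \<noteq> 0" using v v0 by simp
  hence s0: "s \<noteq> 0" using vv by auto
  have "s \<ge> 0" unfolding s_def by (auto intro: sum_nonneg)
  hence sp: "s > 0" using s0 by auto
  show c: "nrm v \<in> carrier_vec n" using v unfolding nrm_def by auto
  have "nrm v \<bullet>c nrm v = complex_of_real ((1/sqrt s) * (1/sqrt s)) * (v \<bullet>c v)"
    unfolding nrm_def s_def[symmetric] by (rule smult_sprod_c[OF v v])
  also have "\<dots> = 1" using vv sp by (simp add: real_sqrt_mult[symmetric] del: of_real_mult)
  finally show 1: "nrm v \<bullet>c nrm v = 1" .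
  show "nrm v \<noteq> 0\<^sub>v n" using 1 c by auto
qed

lemma nrm_unit: assumes v: "v \<in> carrier_vec n" and "v \<bullet>c v = 1" shows "nrm v = v"
proof -
  have "complex_of_real (\<Sum>i<dim_vec v. (cmod (v $ i))\<^sup>2) = 1" using assms sprod_c_real by metis
  hence "(\<Sum>i<dim_vec v. (cmod (v $ i))\<^sup>2) = 1" using of_real_eq_1_iff by blast
  thus ?thesis unfolding nrm_def by simp
qed

definition nc :: "complex vec \<Rightarrow> real" where
  "nc v = 1 / sqrt (\<Sum>i<dim_vec v. (cmod (v $ i))\<^sup>2)"

lemma nc_nz: assumes v: "v \<in> carrier_vec n" and v0: "v \<noteq> 0\<^sub>v n" shows "nc v \<noteq> 0"
proof -
  define s where "s = (\<Sum>i<dim_vec v. (cmod (v $ i))\<^sup>2)"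
  have vv: "v \<bullet>c v = complex_of_real s" using sprod_c_real s_def by auto
  have "v \<bullet>c v \<noteq> 0" using v v0 by simp
  hence s0: "s \<noteq> 0" using vv by auto
  have "s \<ge> 0" unfolding s_def by (auto intro: sum_nonneg)
  hence sp: "s > 0" using s0 by auto
  thus ?thesis unfolding nc_def s_def[symmetric] by simp
qed

lemma nrm_nc: "nrm v = complex_of_real (nc v) \<cdot>\<^sub>v v" unfolding nrm_def nc_def by simp

lemma corthogonal_map_nrm: assumes o: "corthogonal ws" and ws: "set ws \<subseteq> carrier_vec n"
  shows "corthogonal (map nrm ws)" "set (map nrm ws) \<subseteq> carrier_vec n"
    "\<And>w. w \<in> set (map nrm ws) \<Longrightarrow> w \<bullet>c w = 1"
proof -
  have nz: "w \<noteq> 0\<^sub>v n" if "w \<in> set ws" for w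
  proof -
    obtain i where i: "i < length ws" "w = ws ! i" using \<open>w \<in> set ws\<close> by (metis in_set_conv_nth)
    have "ws ! i \<bullet>c ws ! i \<noteq> 0" using o i unfolding corthogonal_def by auto
    thus ?thesis using i ws that by auto
  qed
  show "set (map nrm ws) \<subseteq> carrier_vec n" using ws nz nrm_props by auto
  show "w \<bullet>c w = 1" if "w \<in> set (map nrm ws)" for w using that ws nz nrm_props by auto
  show "corthogonal (map nrm ws)" unfolding corthogonal_def
  proof (intro allI impI)
    fix i j assume i: "i < length (map nrm ws)" and j: "j < length (map nrm ws)"
    have wi: "ws ! i \<in> carrier_vec n" "ws ! i \<noteq> 0\<^sub>v n" using i ws nz by auto
    have wj: "ws ! j \<in> carrier_vec n" "ws ! j \<noteq> 0\<^sub>v n" using j ws nz by auto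
    have "map nrm ws ! i \<bullet>c map nrm ws ! j = complex_of_real (nc (ws!i) * nc (ws!j)) * (ws ! i \<bullet>c ws ! j)"
      using i j by (simp add: nrm_nc smult_sprod_c[OF wi(1) wj(1)])
    moreover have "nc (ws!i) * nc (ws!j) \<noteq> 0" using nc_nz wi wj by auto
    ultimately show "(map nrm ws ! i \<bullet>c map nrm ws ! j = 0) = (i \<noteq> j)"
      using o i j unfolding corthogonal_def by auto
  qed
qed

lemma corthogonal_inv_adj: assumes ws: "set ws \<subseteq> carrier_vec n" "length ws = n"
  and u: "\<And>w. w \<in> set ws \<Longrightarrow> w \<bullet>c w = 1"
  shows "corthogonal_inv (mat_of_cols n ws) = adj (mat_of_cols n ws)"
proof (rule eq_matI)
  fix i j assume i: "i < dim_row (adj (mat_of_cols n ws))" and j: "j < dim_col (adj (mat_of_cols n ws))"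
  hence i': "i < n" "i < length ws" and j': "j < n" using ws by auto
  have wi: "ws ! i \<in> carrier_vec n" "ws ! i \<bullet>c ws ! i = 1" using ws u i' by auto
  have vv: "vec n (($) (ws ! i)) = ws ! i" by (rule eq_vecI, insert wi, auto)
  show "corthogonal_inv (mat_of_cols n ws) $$ (i, j) = adj (mat_of_cols n ws) $$ (i, j)"
    unfolding corthogonal_inv_def using i' j' wi
    by (simp add: vec_inv_def mat_of_rows_def mat_of_cols_def cols_def vv)
qed (insert ws, auto simp: corthogonal_inv_def)

lemma unitary_schur:
  assumes "(A::complex mat) \<in> carrier_mat n n" "char_poly A = (\<Prod>e\<leftarrow>es. [:- e, 1:])"
  shows "\<exists>B P. similar_mat_wit A B P (adj P) \<and> upper_triangular B \<and> diag_mat B = es"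
  using assms
proof (induct es arbitrary: n A)
  case Nil
  with degree_monic_char_poly[of A n] have "n = 0" by auto
  with Nil show ?case
    by (intro exI[of _ A] exI[of _ "1\<^sub>m n"], auto intro!: similar_mat_wit_refl simp: diag_mat_def upper_triangular_def)
next
  case (Cons e es n A)
  let ?n1 = "n - 1"
  from Cons have A: "A \<in> carrier_mat n n" and dim: "dim_row A = n" by auto
  let ?cp = "char_poly A"
  from Cons(3)
  have cp: "?cp = [: -e, 1 :] * (\<Prod>e \<leftarrow> es. [:- e, 1:])" by auto
  have mon: "monic (\<Prod>e\<leftarrow> es. [:- e, 1:])" by (rule monic_prod_list, auto)
  have deg: "degree ?cp = Suc (degree (\<Prod>e\<leftarrow> es. [:- e, 1:]))" unfolding cp
    by (subst degree_mult_eq, insert mon, auto)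
  with degree_monic_char_poly[OF A] have n: "n \<noteq> 0" by auto
  have e: "eigenvalue A e"
    unfolding eigenvalue_root_char_poly[OF A] cp by simp
  define v0 where "v0 = find_eigenvector A e"
  from find_eigenvector[OF A e] have ev: "eigenvector A v0 e" unfolding v0_def .
  from this[unfolded eigenvector_def]
  have v0[simp]: "v0 \<in> carrier_vec n" and v00: "v0 \<noteq> 0\<^sub>v n" and ev0: "A *\<^sub>v v0 = e \<cdot>\<^sub>v v0" using A by auto
  define v where "v = nrm v0"
  have v[simp]: "v \<in> carrier_vec n" and vu: "v \<bullet>c v = 1" and v0': "v \<noteq> 0\<^sub>v n"
    using nrm_props[OF v0 v00] unfolding v_def by auto
  have eigen[simp]: "A *\<^sub>v v = e \<cdot>\<^sub>v v"
    unfolding v_def nrm_nc using A ev0 by (simp add: mult_mat_vec smult_smult_assoc mult.commute)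
  define b where "b = basis_completion v"
  define ws0 where "ws0 = gram_schmidt n b"
  define ws where "ws = map nrm ws0"
  define W where "W = mat_of_cols n ws"
  define W' where "W' = corthogonal_inv W"
  define A' where "A' = W' * A * W"
  obtain A1 A2 A0 A3 where splitA': "split_block A' 1 1 = (A1,A2,A0,A3)"
    by (cases "split_block A' 1 1", auto)
  interpret cof_vec_space n "TYPE(complex)" .
  from basis_completion[OF v v0', folded b_def]
  have span_b: "span (set b) = carrier_vec n" and dist_b: "distinct b"
    and indep: "\<not> lin_dep (set b)" and b: "set b \<subseteq> carrier_vec n" and hdb: "hd b = v"
    and len_b: "length b = n" by auto
  from hdb len_b n obtain vs where bv: "b = v # vs" by (cases b, auto)
  from gram_schmidt_result[OF b dist_b indep refl, folded ws0_def]
  have ws0: "set ws0 \<subseteq> carrier_vec n" "corthogonal ws0" "length ws0 = n"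
    by (auto simp: len_b)
  from gram_schmidt_hd[OF v, of vs, folded bv] have hdws0: "hd ws0 = v" unfolding ws0_def .
  from corthogonal_map_nrm[OF ws0(2,1), folded ws_def]
  have ws: "set ws \<subseteq> carrier_vec n" "corthogonal ws" "length ws = n"
    and wsu: "\<And>w. w \<in> set ws \<Longrightarrow> w \<bullet>c w = 1" using ws0 unfolding ws_def by auto
  have hdws: "hd ws = v" unfolding ws_def using hdws0 ws0 n nrm_unit[OF v vu]
    by (cases ws0, auto)
  have W'adj: "W' = adj W" unfolding W'_def W_def by (rule corthogonal_inv_adj[OF ws(1,3) wsu])
  have orth_W: "corthogonal_mat W" using orthogonal_mat_of_cols ws unfolding W_def.
  have W: "W \<in> carrier_mat n n"
    using ws unfolding W_def using mat_of_cols_carrier(1)[of n ws] by auto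
  have W': "W' \<in> carrier_mat n n" unfolding W'_def corthogonal_inv_def using W
    by (auto simp: mat_of_rows_def)
  from corthogonal_inv_result[OF orth_W]
  have W'W: "inverts_mat W' W" unfolding W'_def .
  hence WW': "inverts_mat W W'" using mat_mult_left_right_inverse[OF W' W] W' W
    unfolding inverts_mat_def by auto
  have A': "A' \<in> carrier_mat n n" using W W' A unfolding A'_def by auto
  have A'A_wit: "similar_mat_wit A' A W' W"
    by (rule similar_mat_witI[of _ _ n], insert W W' A A' W'W WW', auto simp: A'_def
    inverts_mat_def)
  hence A'A: "similar_mat A' A" unfolding similar_mat_def by blast
  from similar_mat_wit_sym[OF A'A_wit] have simAA': "similar_mat_wit A A' W W'" by auto
  let ?f = "(\<lambda> i. if i = 0 then e else 0)"
  have col0: "col A' 0 = vec n ?f"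
    unfolding A'_def W'_def W_def
    using corthogonal_col_ev_0[OF A v v0' eigen n hdws ws].
  from A' n have "dim_row A' = 1 + ?n1" "dim_col A' = 1 + ?n1" by auto
  from split_block[OF splitA' this] have A2: "A2 \<in> carrier_mat 1 ?n1"
    and A3: "A3 \<in> carrier_mat ?n1 ?n1"
    and A'block: "A' = four_block_mat A1 A2 A0 A3" by auto
  have A1id: "A1 = mat 1 1 (\<lambda> _. e)"
    using splitA'[unfolded split_block_def Let_def] arg_cong[OF col0, of "\<lambda> v. v $ 0"] A' n
    by (auto simp: col_def)
  have A1: "A1 \<in> carrier_mat 1 1" unfolding A1id by auto
  {
    fix i
    assume "i < ?n1"
    with arg_cong[OF col0, of "\<lambda> v. v $ Suc i"] A'
    have "A' $$ (Suc i, 0) = 0" by auto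
  } note A'0 = this
  have A0id: "A0 = 0\<^sub>m ?n1 1"
    using splitA'[unfolded split_block_def Let_def] A'0 A' by auto
  have A0: "A0 \<in> carrier_mat ?n1 1" unfolding A0id by auto
  from cp char_poly_similar[OF A'A]
  have cp: "char_poly A' = [: -e,1 :] * (\<Prod> e \<leftarrow> es. [:- e, 1:])" by simp
  also have "char_poly A' = char_poly A1 * char_poly A3"
    unfolding A'block A0id
    by (rule char_poly_four_block_zeros_col[OF A1 A2 A3])
  also have "char_poly A1 = [: -e,1 :]"
    by (simp add: A1id char_poly_defs det_def sign_def)
  finally have cp: "char_poly A3 = (\<Prod> e \<leftarrow> es. [:- e, 1:])"
    by (metis mult_cancel_left pCons_eq_0_iff zero_neq_one)
  from Cons(1)[OF A3 cp] obtain B P' where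
   simIH: "similar_mat_wit A3 B P' (adj P')" and ut: "upper_triangular B" and diag: "diag_mat B = es" by auto
  define Q' where "Q' = adj P'"
  note simIH = simIH[folded Q'_def]
  from similar_mat_witD2[OF A3 simIH]
  have B: "B \<in> carrier_mat ?n1 ?n1" and P': "P' \<in> carrier_mat ?n1 ?n1" and Q': "Q' \<in> carrier_mat ?n1 ?n1"
    and PQ': "P' * Q' = 1\<^sub>m ?n1" by auto
  let ?P' = "four_block_mat (1\<^sub>m 1) (0\<^sub>m 1 ?n1) (0\<^sub>m ?n1 1) P'"
  let ?Q' = "four_block_mat (1\<^sub>m 1) (0\<^sub>m 1 ?n1) (0\<^sub>m ?n1 1) Q'"
  define C where "C = four_block_mat A1 (A2 * P') A0 B"
  have A0_eq: "A0 = P' * A0 * 1\<^sub>m 1" unfolding A0id using P' by auto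
  have simA'C: "similar_mat_wit A' C ?P' ?Q'" unfolding A'block C_def
    by (rule similar_mat_wit_four_block[OF similar_mat_wit_refl[OF A1] simIH _ A0_eq A1 A3 A0],
    insert PQ' A2 P' Q', auto)
  have ut1: "upper_triangular A1" unfolding A1id by auto
  have ut: "upper_triangular C" unfolding C_def A0id
    by (intro upper_triangular_four_block[OF _ B ut1 ut], auto simp: A1id)
  from A1id have diagA1: "diag_mat A1 = [e]" unfolding diag_mat_def by auto
  from diag_four_block_mat[OF A1 B] have diag: "diag_mat C = e # es" unfolding diag diagA1 C_def by simp
  have P'c: "?P' \<in> carrier_mat n n" using P' n by auto
  have adjP: "adj (W * ?P') = ?Q' * W'"
    unfolding W'adj Q'_def adj_mult[OF W P'c]
    by (subst adj_four_block_diag[of _ 1 _ ?n1], insert P', auto)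
  from ut similar_mat_wit_trans[OF simAA' simA'C] diag adjP
  show ?case by metis
qed

definition unitm :: "nat \<Rightarrow> complex mat \<Rightarrow> bool" where
  "unitm n U \<longleftrightarrow> U \<in> carrier_mat n n \<and> U * adj U = 1\<^sub>m n \<and> adj U * U = 1\<^sub>m n"

lemma unit_rows: assumes "unitm n U" "i < n" "j < n"
  shows "(\<Sum>k<n. U $$ (i,k) * cnj (U $$ (j,k))) = (if i = j then 1 else 0)"
proof -
  have U: "U \<in> carrier_mat n n" and e: "U * adj U = 1\<^sub>m n" using assms unfolding unitm_def by auto
  have "(U * adj U) $$ (i,j) = (\<Sum>k<n. U $$ (i,k) * cnj (U $$ (j,k)))"
    using U assms by (simp add: scalar_prod_def lessThan_atLeast0)
  thus ?thesis using e assms by simp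
qed

lemma unit_cols: assumes "unitm n U" "i < n" "j < n"
  shows "(\<Sum>k<n. cnj (U $$ (k,i)) * U $$ (k,j)) = (if i = j then 1 else 0)"
proof -
  have U: "U \<in> carrier_mat n n" and e: "adj U * U = 1\<^sub>m n" using assms unfolding unitm_def by auto
  have "(adj U * U) $$ (i,j) = (\<Sum>k<n. cnj (U $$ (k,i)) * U $$ (k,j))"
    using U assms by (simp add: scalar_prod_def lessThan_atLeast0)
  thus ?thesis using e assms by simp
qed

lemma cnorm_sq: "complex_of_real ((cmod z)\<^sup>2) = z * cnj z"
  by (metis complex_norm_square of_real_power)

lemma unit_sq_rows: assumes "unitm n U" "i < n"
  shows "(\<Sum>k<n. (cmod (U $$ (i,k)))\<^sup>2) = 1"
proof -
  have "complex_of_real (\<Sum>k<n. (cmod (U $$ (i,k)))\<^sup>2) = (\<Sum>k<n. U $$ (i,k) * cnj (U $$ (i,k)))"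
    by (simp add: cnorm_sq del: of_real_power)
  also have "\<dots> = 1" using unit_rows[OF assms assms(2)] by simp
  finally show ?thesis using of_real_eq_1_iff by blast
qed

lemma unit_sq_cols: assumes "unitm n U" "j < n"
  shows "(\<Sum>k<n. (cmod (U $$ (k,j)))\<^sup>2) = 1"
proof -
  have "complex_of_real (\<Sum>k<n. (cmod (U $$ (k,j)))\<^sup>2) = (\<Sum>k<n. cnj (U $$ (k,j)) * U $$ (k,j))"
    by (simp add: cnorm_sq mult.commute del: of_real_power)
  also have "\<dots> = 1" using unit_cols[OF assms assms(2)] by simp
  finally show ?thesis using of_real_eq_1_iff by blast
qed

lemma unit_prod: assumes U: "unitm n U" and V: "unitm n V" shows "unitm n (adj U * V)"
proof -
  have Uc: "U \<in> carrier_mat n n" and Vc: "V \<in> carrier_mat n n" using U V unfolding unitm_def by auto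
  have aU: "adj U \<in> carrier_mat n n" and aV: "adj V \<in> carrier_mat n n" using Uc Vc by auto
  have adjM: "adj (adj U * V) = adj V * U" using adj_mult[OF aU Vc] by simp
  have "(adj U * V) * (adj V * U) = adj U * (V * (adj V * U))"
    using aU Vc aV Uc by (intro assoc_mult_mat) auto
  also have "V * (adj V * U) = (V * adj V) * U"
    using aU Vc aV Uc by (intro assoc_mult_mat[symmetric]) auto
  also have "\<dots> = U" using V Uc unfolding unitm_def by simp
  also have "adj U * U = 1\<^sub>m n" using U unfolding unitm_def by simp
  finally have 1: "(adj U * V) * adj (adj U * V) = 1\<^sub>m n" using adjM by simp
  have "(adj V * U) * (adj U * V) = adj V * (U * (adj U * V))"
    using aU Vc aV Uc by (intro assoc_mult_mat) auto
  also have "U * (adj U * V) = (U * adj U) * V"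
    using aU Vc aV Uc by (intro assoc_mult_mat[symmetric]) auto
  also have "\<dots> = V" using U Vc unfolding unitm_def by simp
  also have "adj V * V = 1\<^sub>m n" using V unfolding unitm_def by simp
  finally have 2: "adj (adj U * V) * (adj U * V) = 1\<^sub>m n" using adjM by simp
  show ?thesis unfolding unitm_def using 1 2 aU Vc by auto
qed

lemma adj_mult_index: assumes "U \<in> carrier_mat n n" "V \<in> carrier_mat n n" "k < n" "j < n"
  shows "(adj U * V) $$ (k,j) = (\<Sum>i<n. cnj (U $$ (i,k)) * V $$ (i,j))"
  using assms by (simp add: scalar_prod_def lessThan_atLeast0)

definition spec :: "nat \<Rightarrow> complex mat \<Rightarrow> complex mat \<Rightarrow> (nat \<Rightarrow> real) \<Rightarrow> bool" where
  "spec n X U l \<longleftrightarrow> X \<in> carrier_mat n n \<and> unitm n U \<and>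
     (\<forall>i<n. \<forall>j<n. X $$ (i,j) = (\<Sum>k<n. U $$ (i,k) * complex_of_real (l k) * cnj (U $$ (j,k))))"

definition qf :: "nat \<Rightarrow> complex mat \<Rightarrow> (nat \<Rightarrow> complex) \<Rightarrow> complex" where
  "qf n X z = (\<Sum>i<n. \<Sum>j<n. cnj (z i) * X $$ (i,j) * z j)"

lemma qf_spec: assumes "spec n X U l"
  shows "qf n X z = (\<Sum>k<n. complex_of_real (l k * (cmod (\<Sum>i<n. cnj (U $$ (i,k)) * z i))\<^sup>2))"
proof -
  have X: "\<And>i j. i < n \<Longrightarrow> j < n \<Longrightarrow> X $$ (i,j) = (\<Sum>k<n. U $$ (i,k) * complex_of_real (l k) * cnj (U $$ (j,k)))"
    using assms unfolding spec_def by auto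
  have "qf n X z = (\<Sum>i<n. \<Sum>j<n. \<Sum>k<n. complex_of_real (l k) * (cnj (z i) * U $$ (i,k)) * (cnj (U $$ (j,k)) * z j))"
    unfolding qf_def by (intro sum.cong refl, simp add: X sum_distrib_left sum_distrib_right mult_ac)
  also have "\<dots> = (\<Sum>k<n. \<Sum>i<n. \<Sum>j<n. complex_of_real (l k) * (cnj (z i) * U $$ (i,k)) * (cnj (U $$ (j,k)) * z j))"
    by (subst sum.swap, subst (2) sum.swap, simp)
  also have "\<dots> = (\<Sum>k<n. complex_of_real (l k) * ((\<Sum>i<n. cnj (z i) * U $$ (i,k)) * (\<Sum>j<n. cnj (U $$ (j,k)) * z j)))"
    by (simp add: sum_distrib_left sum_distrib_right mult_ac)
  also have "\<dots> = (\<Sum>k<n. complex_of_real (l k * (cmod (\<Sum>i<n. cnj (U $$ (i,k)) * z i))\<^sup>2))"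
  proof (intro sum.cong refl)
    fix k
    have "(\<Sum>i<n. cnj (z i) * U $$ (i,k)) = cnj (\<Sum>i<n. cnj (U $$ (i,k)) * z i)"
      by (simp add: cnj_sum mult.commute)
    thus "complex_of_real (l k) * ((\<Sum>i<n. cnj (z i) * U $$ (i,k)) * (\<Sum>j<n. cnj (U $$ (j,k)) * z j))
      = complex_of_real (l k * (cmod (\<Sum>i<n. cnj (U $$ (i,k)) * z i))\<^sup>2)"
      by (simp only: of_real_mult cnorm_sq mult.commute)
  qed
  finally show ?thesis .
qed

lemma qf_spec_re: assumes "spec n X U l"
  shows "Re (qf n X z) = (\<Sum>k<n. l k * (cmod (\<Sum>i<n. cnj (U $$ (i,k)) * z i))\<^sup>2)"
  unfolding qf_spec[OF assms] by (simp add: Re_sum)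

lemma spec_unit: "spec n X U l \<Longrightarrow> unitm n U" unfolding spec_def by auto
lemma spec_carrier: "spec n X U l \<Longrightarrow> X \<in> carrier_mat n n" unfolding spec_def by auto

lemma qf_col: assumes "spec n X U l" "k < n"
  shows "qf n X (\<lambda>i. U $$ (i,k)) = complex_of_real (l k)"
proof -
  have U: "unitm n U" using assms spec_unit by auto
  have "qf n X (\<lambda>i. U $$ (i,k)) = (\<Sum>m<n. if m = k then complex_of_real (l k) else 0)"
    unfolding qf_spec[OF assms(1)] by (intro sum.cong refl, simp add: unit_cols[OF U _ assms(2)])
  also have "\<dots> = complex_of_real (l k)" using assms(2) by simp
  finally show ?thesis .
qed

lemma spec_nonneg_qf: assumes "spec n X U l" "\<And>k. k < n \<Longrightarrow> l k \<ge> 0"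
  shows "Re (qf n X z) \<ge> 0"
  unfolding qf_spec_re[OF assms(1)] using assms(2) by (auto intro!: sum_nonneg)

lemma spec_trace: assumes "spec n X U l"
  shows "(\<Sum>i<n. X $$ (i,i)) = complex_of_real (\<Sum>k<n. l k)"
proof -
  have U: "unitm n U" using assms spec_unit by auto
  have "(\<Sum>i<n. X $$ (i,i)) = (\<Sum>i<n. \<Sum>k<n. complex_of_real (l k) * (U $$ (i,k) * cnj (U $$ (i,k))))"
    using assms unfolding spec_def by (intro sum.cong refl) (simp add: mult_ac)
  also have "\<dots> = (\<Sum>k<n. complex_of_real (l k) * complex_of_real (\<Sum>i<n. (cmod (U $$ (i,k)))\<^sup>2))"
    by (subst sum.swap) (simp add: sum_distrib_left cnorm_sq del: of_real_power)
  also have "\<dots> = complex_of_real (\<Sum>k<n. l k)"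
    using unit_sq_cols[OF U] by simp
  finally show ?thesis .
qed

lemma hermitian_spec: assumes A: "A \<in> carrier_mat n n" and h: "adj A = A"
  shows "\<exists>U. spec n A U (\<lambda>k. Re (eigvals_list A ! k)) \<and> length (eigvals_list A) = n"
proof -
  define es where "es = eigvals_list A"
  have cp: "char_poly A = (\<Prod>a\<leftarrow>es. [:- a, 1:])"
    unfolding es_def eigvals_list_def using char_poly_factorized[OF A] by (metis (mono_tags, lifting) someI_ex)
  from unitary_schur[OF A cp] obtain B P where sim: "similar_mat_wit A B P (adj P)"
    and ut: "upper_triangular B" and dg: "diag_mat B = es" by auto
  from similar_mat_witD2[OF A sim] have B: "B \<in> carrier_mat n n" and P: "P \<in> carrier_mat n n"
    and PP: "P * adj P = 1\<^sub>m n" and PP2: "adj P * P = 1\<^sub>m n" by auto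
  have AB: "A = P * B * adj P" using sim unfolding similar_mat_wit_def Let_def by auto
  have uP: "unitm n P" unfolding unitm_def using P PP PP2 by auto
  have aP: "adj P \<in> carrier_mat n n" using P by auto
  have len: "length es = n" using dg B unfolding diag_mat_def by auto
  have "adj P * A * P = adj P * (P * (B * (adj P * P)))"
    unfolding AB using P B aP by (simp add: assoc_mult_mat[of _ n n _ n _ n])
  also have "adj P * (P * (B * (adj P * P))) = (adj P * P) * (B * (adj P * P))"
    using P B aP by (intro assoc_mult_mat[symmetric]) auto
  also have "\<dots> = B" using PP2 B by simp
  finally have BA: "B = adj P * A * P" by simp
  have "adj B = adj P * adj (adj P * A)"
    unfolding BA using aP A P by (intro adj_mult[of _ n n]) auto
  also have "adj (adj P * A) = adj A * P" using aP A by (simp add: adj_mult[of _ n n])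
  also have "adj P * (adj A * P) = adj P * A * P" using h aP A P by (simp add: assoc_mult_mat[of _ n n _ n _ n])
  finally have hB: "adj B = B" using BA by simp
  have Bd: "B $$ (i,j) = 0" if "i < n" "j < n" "i \<noteq> j" for i j
  proof (cases "j < i")
    case True thus ?thesis using ut that B unfolding upper_triangular_def by auto
  next
    case False
    hence "i < j" using that by auto
    hence "B $$ (j,i) = 0" using ut that B unfolding upper_triangular_def by auto
    moreover have "B $$ (i,j) = cnj (B $$ (j,i))" using arg_cong[OF hB, of "\<lambda>M. M $$ (i,j)"] that B by auto
    ultimately show ?thesis by simp
  qed
  have Bkk: "B $$ (k,k) = complex_of_real (Re (es ! k))" if "k < n" for k
  proof -
    have "B $$ (k,k) = cnj (B $$ (k,k))" using arg_cong[OF hB, of "\<lambda>M. M $$ (k,k)"] that B by auto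
    hence "Im (B $$ (k,k)) = 0" by (metis cnj.sel(2) neg_equal_zero)
    moreover have "es ! k = B $$ (k,k)" using dg[symmetric] that B unfolding diag_mat_def by auto
    ultimately show ?thesis by (simp add: complex_eq_iff)
  qed
  have PB: "(P * B) $$ (i,m) = P $$ (i,m) * B $$ (m,m)" if "i < n" "m < n" for i m
  proof -
    have "(P * B) $$ (i,m) = (\<Sum>k<n. P $$ (i,k) * B $$ (k,m))"
      using P B that by (simp add: scalar_prod_def lessThan_atLeast0)
    also have "\<dots> = (\<Sum>k<n. if k = m then P $$ (i,m) * B $$ (m,m) else 0)"
      by (intro sum.cong refl, insert Bd that, auto)
    finally show ?thesis using that by simp
  qed
  have "A $$ (i,j) = (\<Sum>k<n. P $$ (i,k) * complex_of_real (Re (es ! k)) * cnj (P $$ (j,k)))"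
    if "i < n" "j < n" for i j
  proof -
    have "A $$ (i,j) = (\<Sum>k<n. (P * B) $$ (i,k) * adj P $$ (k,j))"
      unfolding AB using P B aP that by (simp add: scalar_prod_def lessThan_atLeast0)
    also have "\<dots> = (\<Sum>k<n. P $$ (i,k) * complex_of_real (Re (es ! k)) * cnj (P $$ (j,k)))"
      by (intro sum.cong refl, insert that P, simp add: PB Bkk)
    finally show ?thesis .
  qed
  hence "spec n A P (\<lambda>k. Re (es ! k))" unfolding spec_def using A uP by auto
  thus ?thesis using len unfolding es_def by auto
qed

lemma spec_herm: assumes "spec n X U l" shows "adj X = X"
proof -
  have X: "X \<in> carrier_mat n n" using assms spec_carrier by auto
  show ?thesis
  proof (rule eq_matI)
    fix i j assume "i < dim_row X" "j < dim_col X"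
    hence ij: "i < n" "j < n" using X by auto
    have "adj X $$ (i,j) = cnj (X $$ (j,i))" using X ij by simp
    also have "\<dots> = X $$ (i,j)" using assms ij unfolding spec_def
      by (simp add: cnj_sum mult_ac)
    finally show "adj X $$ (i,j) = X $$ (i,j)" .
  qed (insert X, auto)
qed

lemma qf_re_col: assumes "spec n X U l" "unitm n V" "j < n"
  shows "Re (qf n X (\<lambda>i. V $$ (i,j))) = (\<Sum>k<n. (cmod ((adj U * V) $$ (k,j)))\<^sup>2 * l k)"
  unfolding qf_spec_re[OF assms(1)]
proof (intro sum.cong refl)
  fix k assume k: "k \<in> {..<n}"
  have "(adj U * V) $$ (k,j) = (\<Sum>i<n. cnj (U $$ (i,k)) * V $$ (i,j))"
    using adj_mult_index[of U n V k j] assms spec_unit[OF assms(1)] k unfolding unitm_def by auto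
  thus "l k * (cmod (\<Sum>i<n. cnj (U $$ (i, k)) * V $$ (i, j)))\<^sup>2 = (cmod ((adj U * V) $$ (k, j)))\<^sup>2 * l k"
    by simp
qed

lemma dstoch_spec: assumes X: "spec n X U l" and V: "unitm n V" and l: "\<And>k. k < n \<Longrightarrow> l k \<ge> 0"
  shows "(\<Sum>j<n. etan (Re (qf n X (\<lambda>i. V $$ (i,j))))) \<le> (\<Sum>k<n. etan (l k))"
proof -
  have M: "unitm n (adj U * V)" using unit_prod[OF spec_unit[OF X] V] .
  have "(\<Sum>j<n. etan (Re (qf n X (\<lambda>i. V $$ (i,j))))) = (\<Sum>j<n. etan (\<Sum>k<n. (cmod ((adj U * V) $$ (k,j)))\<^sup>2 * l k))"
    by (intro sum.cong refl, simp add: qf_re_col[OF X V])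
  also have "\<dots> \<le> (\<Sum>k<n. etan (l k))"
    by (rule dstoch_etan, insert l unit_sq_cols[OF M] unit_sq_rows[OF M], auto)
  finally show ?thesis .
qed

lemma qfcol_sum: assumes X: "spec n X U l" and V: "unitm n V"
  shows "(\<Sum>j<n. Re (qf n X (\<lambda>i. V $$ (i,j)))) = (\<Sum>k<n. l k)"
proof -
  have M: "unitm n (adj U * V)" using unit_prod[OF spec_unit[OF X] V] .
  have "(\<Sum>j<n. Re (qf n X (\<lambda>i. V $$ (i,j)))) = (\<Sum>j<n. \<Sum>k<n. (cmod ((adj U * V) $$ (k,j)))\<^sup>2 * l k)"
    using qf_re_col[OF X V] by simp
  also have "\<dots> = (\<Sum>k<n. (\<Sum>j<n. (cmod ((adj U * V) $$ (k,j)))\<^sup>2) * l k)"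
    by (subst sum.swap) (simp add: sum_distrib_right)
  also have "\<dots> = (\<Sum>k<n. l k)" using unit_sq_rows[OF M] by simp
  finally show ?thesis .
qed

lemma spec_invariant: assumes X: "spec n X U l" and Y: "spec n X V m"
  and l: "\<And>k. k < n \<Longrightarrow> l k \<ge> 0" and m: "\<And>k. k < n \<Longrightarrow> m k \<ge> 0"
  shows "(\<Sum>k<n. etan (l k)) = (\<Sum>k<n. etan (m k))"
proof -
  have 1: "(\<Sum>j<n. etan (m j)) \<le> (\<Sum>k<n. etan (l k))"
    using dstoch_spec[OF X spec_unit[OF Y] l] qf_col[OF Y] by simp
  have 2: "(\<Sum>j<n. etan (l j)) \<le> (\<Sum>k<n. etan (m k))"
    using dstoch_spec[OF Y spec_unit[OF X] m] qf_col[OF X] by simp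
  from 1 2 show ?thesis by simp
qed

lemma eta2_etan: "eta2 x = etan x / ln 2"
  unfolding eta2_def etan_def log_def by simp

lemma vn_spec: assumes X: "spec n X U l" and l: "\<And>k. k < n \<Longrightarrow> l k \<ge> 0"
  shows "vn_entropy X = - (\<Sum>k<n. etan (l k)) / ln 2"
proof -
  from hermitian_spec[OF spec_carrier[OF X] spec_herm[OF X]] obtain V where
    V: "spec n X V (\<lambda>k. Re (eigvals_list X ! k))" and len: "length (eigvals_list X) = n" by auto
  have m: "Re (eigvals_list X ! k) \<ge> 0" if "k < n" for k
    using spec_nonneg_qf[OF X l, of "\<lambda>i. V $$ (i,k)"] qf_col[OF V that] by simp
  have "vn_entropy X = - (\<Sum>k<n. eta2 (Re (eigvals_list X ! k)))"
    unfolding vn_entropy_def by (simp add: sum_list_sum_nth len atLeast0LessThan)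
  also have "\<dots> = - (\<Sum>k<n. etan (Re (eigvals_list X ! k))) / ln 2"
    by (simp add: eta2_etan sum_divide_distrib)
  also have "(\<Sum>k<n. etan (Re (eigvals_list X ! k))) = (\<Sum>k<n. etan (l k))"
    using spec_invariant[OF V X m l] by simp
  finally show ?thesis .
qed

lemma qf_add: assumes "X \<in> carrier_mat n n" "Y \<in> carrier_mat n n"
  shows "qf n (X + Y) z = qf n X z + qf n Y z"
  unfolding qf_def using assms by (simp add: distrib_left distrib_right sum.distrib)

lemma key_cond: fixes n :: nat assumes m: "\<And>j. j < n \<Longrightarrow> m j \<ge> (0::real)" and lp: "lam > 0"
  and H: "\<And>y. lam * (cmod (\<Sum>j<n. r j * y j))\<^sup>2 \<le> (\<Sum>j<n. m j * (cmod (y j))\<^sup>2)"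
  shows "(\<forall>j<n. m j = 0 \<longrightarrow> r j = 0) \<and> lam * (\<Sum>j<n. (cmod (r j))\<^sup>2 / m j) \<le> 1"
proof
  show "\<forall>j<n. m j = 0 \<longrightarrow> r j = 0"
  proof (intro allI impI)
    fix j assume j: "j < n" and mj: "m j = 0"
    define y where "y = (\<lambda>i. if i = j then (1::complex) else 0)"
    have "(\<Sum>i<n. r i * y i) = (\<Sum>i<n. if i = j then r j else 0)" unfolding y_def
      by (intro sum.cong refl) auto
    also have "\<dots> = r j" using j sum.delta[of "{..<n}" j "\<lambda>_. r j"] by simp
    finally have "(\<Sum>i<n. r i * y i) = r j" .
    moreover have "(\<Sum>i<n. m i * (cmod (y i))\<^sup>2) = (\<Sum>i<n. if i = j then m j else 0)" unfolding y_def
      by (intro sum.cong refl) auto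
    moreover have "(\<Sum>i<n. if i = j then m j else 0) = m j" using j sum.delta[of "{..<n}" j "\<lambda>_. m j"] by simp
    ultimately have "lam * (cmod (r j))\<^sup>2 \<le> 0" using H[of y] mj by simp
    hence "(cmod (r j))\<^sup>2 \<le> 0" using lp by (simp add: mult_le_0_iff)
    thus "r j = 0" by simp
  qed
  define S where "S = (\<Sum>j<n. (cmod (r j))\<^sup>2 / m j)"
  define y where "y = (\<lambda>j. cnj (r j) / complex_of_real (m j))"
  have S0: "S \<ge> 0" unfolding S_def using m by (auto intro!: sum_nonneg)
  have "(\<Sum>j<n. r j * y j) = (\<Sum>j<n. complex_of_real ((cmod (r j))\<^sup>2 / m j))"
    unfolding y_def
  proof (intro sum.cong refl)
    fix j
    have "r j * cnj (r j) = complex_of_real ((cmod (r j))\<^sup>2)" by (simp only: cnorm_sq)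
    thus "r j * (cnj (r j) / complex_of_real (m j)) = complex_of_real ((cmod (r j))\<^sup>2 / m j)"
      by (simp only: times_divide_eq_right of_real_divide)
  qed
  also have "\<dots> = complex_of_real S" unfolding S_def by simp
  finally have 1: "(\<Sum>j<n. r j * y j) = complex_of_real S" .
  have "(\<Sum>j<n. m j * (cmod (y j))\<^sup>2) = S" unfolding S_def y_def
  proof (intro sum.cong refl)
    fix j assume "j \<in> {..<n}"
    show "m j * (cmod (cnj (r j) / complex_of_real (m j)))\<^sup>2 = (cmod (r j))\<^sup>2 / m j"
      by (cases "m j = 0", simp, simp add: norm_divide power_divide power2_eq_square)
  qed
  with H[of y] 1 have "lam * S\<^sup>2 \<le> S" using S0 by simp
  hence "lam * S \<le> 1" using S0 by (cases "S = 0", simp, simp add: power2_eq_square)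
  thus "lam * (\<Sum>j<n. (cmod (r j))\<^sup>2 / m j) \<le> 1" unfolding S_def .
qed

lemma coord_change: assumes "U \<in> carrier_mat n n" "V \<in> carrier_mat n n" "k < n"
  shows "(\<Sum>i<n. cnj (U $$ (i,k)) * (\<Sum>j<n. V $$ (i,j) * y j)) = (\<Sum>j<n. (adj U * V) $$ (k,j) * y j)"
proof -
  have "(\<Sum>i<n. cnj (U $$ (i,k)) * (\<Sum>j<n. V $$ (i,j) * y j)) = (\<Sum>j<n. (\<Sum>i<n. cnj (U $$ (i,k)) * V $$ (i,j)) * y j)"
    by (simp add: sum_distrib_left sum_distrib_right mult_ac) (subst sum.swap, simp)
  also have "\<dots> = (\<Sum>j<n. (adj U * V) $$ (k,j) * y j)"
  proof (intro sum.cong refl)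
    fix j assume "j \<in> {..<n}"
    thus "(\<Sum>i<n. cnj (U $$ (i,k)) * V $$ (i,j)) * y j = (adj U * V) $$ (k,j) * y j"
      using adj_mult_index[OF assms(1,2,3), of j] by simp
  qed
  finally show ?thesis .
qed

lemma coord_self: assumes "unitm n V" "k < n"
  shows "(\<Sum>i<n. cnj (V $$ (i,k)) * (\<Sum>j<n. V $$ (i,j) * y j)) = y k"
proof -
  have V: "V \<in> carrier_mat n n" and 1: "adj V * V = 1\<^sub>m n" using assms unfolding unitm_def by auto
  have "(\<Sum>i<n. cnj (V $$ (i,k)) * (\<Sum>j<n. V $$ (i,j) * y j)) = (\<Sum>j<n. (adj V * V) $$ (k,j) * y j)"
    by (rule coord_change[OF V V assms(2)])
  also have "\<dots> = (\<Sum>j<n. if k = j then y j else 0)" unfolding 1 using assms(2)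
    by (intro sum.cong refl) auto
  also have "\<dots> = y k" using assms(2) by simp
  finally show ?thesis .
qed

lemma concave_spec:
  assumes X: "spec n X U l" and Y: "spec n Y U' l'" and Z: "spec n (X + Y) V m"
    and l: "\<And>k. k < n \<Longrightarrow> l k \<ge> 0" and l': "\<And>k. k < n \<Longrightarrow> l' k \<ge> 0"
  shows "(\<Sum>k<n. etan (m k)) - etan ((\<Sum>k<n. l k) + (\<Sum>k<n. l' k))
     \<le> ((\<Sum>k<n. etan (l k)) - etan (\<Sum>k<n. l k)) + ((\<Sum>k<n. etan (l' k)) - etan (\<Sum>k<n. l' k))"
proof -
  have Xc: "X \<in> carrier_mat n n" and Yc: "Y \<in> carrier_mat n n" using X Y spec_carrier by auto
  have uV: "unitm n V" using spec_unit[OF Z] .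
  define a where "a j = Re (qf n X (\<lambda>i. V $$ (i,j)))" for j
  define b where "b j = Re (qf n Y (\<lambda>i. V $$ (i,j)))" for j
  have mab: "m j = a j + b j" if "j < n" for j
    using arg_cong[OF qf_col[OF Z that], of Re] qf_add[OF Xc Yc] unfolding a_def b_def by simp
  have a0: "a j \<ge> 0" for j unfolding a_def by (rule spec_nonneg_qf[OF X l])
  have b0: "b j \<ge> 0" for j unfolding b_def by (rule spec_nonneg_qf[OF Y l'])
  have sa: "sum a {..<n} = (\<Sum>k<n. l k)" unfolding a_def by (rule qfcol_sum[OF X uV])
  have sb: "sum b {..<n} = (\<Sum>k<n. l' k)" unfolding b_def by (rule qfcol_sum[OF Y uV])
  have da: "(\<Sum>j<n. etan (a j)) \<le> (\<Sum>k<n. etan (l k))" unfolding a_def by (rule dstoch_spec[OF X uV l])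
  have db: "(\<Sum>j<n. etan (b j)) \<le> (\<Sum>k<n. etan (l' k))" unfolding b_def by (rule dstoch_spec[OF Y uV l'])
  have c: "(\<Sum>j<n. etan (a j + b j) - etan (a j) - etan (b j))
    \<le> etan (sum a {..<n} + sum b {..<n}) - etan (sum a {..<n}) - etan (sum b {..<n})"
    by (rule concave_etan, insert a0 b0, auto)
  have "(\<Sum>k<n. etan (m k)) = (\<Sum>j<n. etan (a j + b j))" by (intro sum.cong refl, simp add: mab)
  also have "\<dots> = (\<Sum>j<n. etan (a j + b j) - etan (a j) - etan (b j)) + (\<Sum>j<n. etan (a j)) + (\<Sum>j<n. etan (b j))"
    by (simp add: sum_subtractf)
  finally show ?thesis using c da db unfolding sa sb by linarith
qed

lemma spec_sum_eq:
  assumes X: "spec n X U l" and Y: "spec n Y U' l'" and Z: "spec n (X + Y) V m"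
  shows "(\<Sum>k<n. m k) = (\<Sum>k<n. l k) + (\<Sum>k<n. l' k)"
proof -
  have Xc: "X \<in> carrier_mat n n" and Yc: "Y \<in> carrier_mat n n" using X Y spec_carrier by auto
  have "complex_of_real (\<Sum>k<n. m k) = (\<Sum>i<n. (X + Y) $$ (i,i))" using spec_trace[OF Z] by simp
  also have "\<dots> = (\<Sum>i<n. X $$ (i,i)) + (\<Sum>i<n. Y $$ (i,i))" using Xc Yc by (simp add: sum.distrib)
  also have "\<dots> = complex_of_real ((\<Sum>k<n. l k) + (\<Sum>k<n. l' k))" using spec_trace[OF X] spec_trace[OF Y] by simp
  finally show ?thesis using of_real_eq_iff by blast
qed

lemma subadd_spec:
  assumes X: "spec n X U l" and Y: "spec n Y U' l'" and Z: "spec n (X + Y) V m"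
    and l: "\<And>k. k < n \<Longrightarrow> l k \<ge> 0" and l': "\<And>k. k < n \<Longrightarrow> l' k \<ge> 0"
  shows "(\<Sum>k<n. etan (l k)) + (\<Sum>k<n. etan (l' k)) \<le> (\<Sum>k<n. etan (m k))"
proof -
  have Xc: "X \<in> carrier_mat n n" and Yc: "Y \<in> carrier_mat n n" using X Y spec_carrier by auto
  have uV: "unitm n V" using spec_unit[OF Z] .
  have uU: "unitm n U" using spec_unit[OF X] .
  have uU': "unitm n U'" using spec_unit[OF Y] .
  have Uc: "U \<in> carrier_mat n n" and U'c: "U' \<in> carrier_mat n n" and Vc: "V \<in> carrier_mat n n"
    using uU uU' uV unfolding unitm_def by auto
  define c where "c j k = (cmod ((adj U * V) $$ (k,j)))\<^sup>2" for j k
  define d where "d j k = (cmod ((adj U' * V) $$ (k,j)))\<^sup>2" for j k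
  have M: "unitm n (adj U * V)" using unit_prod[OF uU uV] .
  have M': "unitm n (adj U' * V)" using unit_prod[OF uU' uV] .
  have mab: "m j = (\<Sum>k<n. l k * c j k) + (\<Sum>k<n. l' k * d j k)" if "j < n" for j
  proof -
    have "m j = Re (qf n X (\<lambda>i. V $$ (i,j))) + Re (qf n Y (\<lambda>i. V $$ (i,j)))"
      using arg_cong[OF qf_col[OF Z that], of Re] qf_add[OF Xc Yc] by simp
    thus ?thesis unfolding qf_re_col[OF X uV that] qf_re_col[OF Y uV that] c_def d_def
      by (simp add: mult.commute)
  qed
  have m0: "m j \<ge> 0" if "j < n" for j
    unfolding mab[OF that] c_def d_def using l l' by (auto intro!: add_nonneg_nonneg sum_nonneg)
  have Hgen: "lam k * (cmod (\<Sum>j<n. (adj W * V) $$ (k,j) * y j))\<^sup>2 \<le> (\<Sum>j<n. m j * (cmod (y j))\<^sup>2)"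
    if W: "spec n Q W lam" and lam: "\<And>k. k < n \<Longrightarrow> lam k \<ge> 0" and Q': "spec n Q' W' lam'"
      and lam': "\<And>k. k < n \<Longrightarrow> lam' k \<ge> 0" and QQ: "Q + Q' = X + Y" and k: "k < n" for Q W lam Q' W' lam' k y
  proof -
    have Qc: "Q \<in> carrier_mat n n" and Q'c: "Q' \<in> carrier_mat n n" using W Q' spec_carrier by auto
    have Wc: "W \<in> carrier_mat n n" using spec_unit[OF W] unfolding unitm_def by auto
    define z where "z i = (\<Sum>j<n. V $$ (i,j) * y j)" for i
    have "Re (qf n (X + Y) z) = (\<Sum>j<n. m j * (cmod (y j))\<^sup>2)"
      unfolding qf_spec_re[OF Z] z_def using coord_self[OF uV] by simp
    moreover have "Re (qf n (X + Y) z) = Re (qf n Q z) + Re (qf n Q' z)"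
      unfolding QQ[symmetric] qf_add[OF Qc Q'c] by simp
    moreover have "Re (qf n Q' z) \<ge> 0" by (rule spec_nonneg_qf[OF Q' lam'])
    moreover have "Re (qf n Q z) \<ge> lam k * (cmod (\<Sum>j<n. (adj W * V) $$ (k,j) * y j))\<^sup>2"
    proof -
      have "lam k * (cmod (\<Sum>i<n. cnj (W $$ (i,k)) * z i))\<^sup>2 \<le> (\<Sum>k<n. lam k * (cmod (\<Sum>i<n. cnj (W $$ (i,k)) * z i))\<^sup>2)"
        by (rule member_le_sum[of k "{..<n}" "\<lambda>k. lam k * (cmod (\<Sum>i<n. cnj (W $$ (i,k)) * z i))\<^sup>2"], insert k lam, auto)
      thus ?thesis unfolding qf_spec_re[OF W] z_def coord_change[OF Wc Vc k] .
    qed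
    ultimately show ?thesis by linarith
  qed
  show ?thesis
  proof (rule subadd_etan[of "{..<n}" "{..<n}" "{..<n}" c d l l' m])
    show "\<And>k. k \<in> {..<n} \<Longrightarrow> (\<Sum>j<n. c j k) = 1" unfolding c_def using unit_sq_rows[OF M] by auto
    show "\<And>k. k \<in> {..<n} \<Longrightarrow> (\<Sum>j<n. d j k) = 1" unfolding d_def using unit_sq_rows[OF M'] by auto
    show "\<And>j. j \<in> {..<n} \<Longrightarrow> m j = (\<Sum>k<n. l k * c j k) + (\<Sum>k<n. l' k * d j k)" using mab by auto
    show "(\<forall>j\<in>{..<n}. m j = 0 \<longrightarrow> c j k = 0) \<and> l k * (\<Sum>j<n. c j k / m j) \<le> 1"
      if k: "k \<in> {..<n}" "l k > 0" for k
    proof -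
      have kn: "k < n" using k by auto
      have kc: "(\<forall>j<n. m j = 0 \<longrightarrow> (adj U * V) $$ (k,j) = 0) \<and>
          l k * (\<Sum>j<n. (cmod ((adj U * V) $$ (k,j)))\<^sup>2 / m j) \<le> 1"
        by (rule key_cond[of n m "l k" "\<lambda>j. (adj U * V) $$ (k,j)"], rule m0, assumption, rule k(2),
          rule Hgen[OF X l Y l' refl kn])
      thus ?thesis unfolding c_def by simp
    qed
    have YX: "Y + X = X + Y" using Xc Yc by (rule comm_add_mat[symmetric])
    show "(\<forall>j\<in>{..<n}. m j = 0 \<longrightarrow> d j k = 0) \<and> l' k * (\<Sum>j<n. d j k / m j) \<le> 1"
      if k: "k \<in> {..<n}" "l' k > 0" for k
    proof -
      have kn: "k < n" using k by auto
      have kc: "(\<forall>j<n. m j = 0 \<longrightarrow> (adj U' * V) $$ (k,j) = 0) \<and>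
          l' k * (\<Sum>j<n. (cmod ((adj U' * V) $$ (k,j)))\<^sup>2 / m j) \<le> 1"
        by (rule key_cond[of n m "l' k" "\<lambda>j. (adj U' * V) $$ (k,j)"], rule m0, assumption, rule k(2),
          rule Hgen[OF Y l' X l YX kn])
      thus ?thesis unfolding d_def by simp
    qed
  qed (insert l l', auto simp: c_def d_def)
qed



definition Gm :: "nat \<Rightarrow> nat \<Rightarrow> (nat \<Rightarrow> nat \<Rightarrow> complex) \<Rightarrow> complex mat" where
  "Gm n m f = mat n n (\<lambda>(i,i'). \<Sum>j<m. f i j * cnj (f i' j))"

lemma Gm_carrier[simp]: "Gm n m f \<in> carrier_mat n n" unfolding Gm_def by auto
lemma Gm_dims[simp]: "dim_row (Gm n m f) = n" "dim_col (Gm n m f) = n" unfolding Gm_def by auto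

lemma Gm_herm: "adj (Gm n m f) = Gm n m f"
  by (rule eq_matI) (auto simp: Gm_def cnj_sum mult.commute)

lemma Gm_qf: "Re (qf n (Gm n m f) z) \<ge> 0"
proof -
  have "qf n (Gm n m f) z = (\<Sum>i<n. \<Sum>i'<n. \<Sum>j<m. (cnj (z i) * f i j) * (cnj (f i' j) * z i'))"
    unfolding qf_def Gm_def by (intro sum.cong refl, simp add: sum_distrib_left sum_distrib_right mult_ac)
  also have "\<dots> = (\<Sum>j<m. \<Sum>i<n. \<Sum>i'<n. (cnj (z i) * f i j) * (cnj (f i' j) * z i'))"
    by (subst sum.swap, subst (2) sum.swap, simp)
  also have "\<dots> = (\<Sum>j<m. (\<Sum>i<n. cnj (z i) * f i j) * cnj (\<Sum>i<n. cnj (z i) * f i j))"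
    by (simp add: sum_distrib_left sum_distrib_right cnj_sum mult_ac)
  also have "\<dots> = complex_of_real (\<Sum>j<m. (cmod (\<Sum>i<n. cnj (z i) * f i j))\<^sup>2)"
    by (simp add: cnorm_sq del: of_real_power)
  finally show ?thesis by (simp add: sum_nonneg)
qed

lemma psd_spec: assumes X: "X \<in> carrier_mat n n" and h: "adj X = X" and p: "\<And>z. Re (qf n X z) \<ge> 0"
  shows "\<exists>U l. spec n X U l \<and> (\<forall>k<n. l k \<ge> 0)"
proof -
  from hermitian_spec[OF X h] obtain U where U: "spec n X U (\<lambda>k. Re (eigvals_list X ! k))" by auto
  have "Re (eigvals_list X ! k) \<ge> 0" if "k < n" for k
    using p[of "\<lambda>i. U $$ (i,k)"] qf_col[OF U that] by simp
  thus ?thesis using U by blast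
qed

lemma spec_scale: assumes "spec n X U l"
  shows "spec n (complex_of_real c \<cdot>\<^sub>m X) U (\<lambda>k. c * l k)"
  using assms unfolding spec_def by (auto simp: sum_distrib_left mult_ac)

lemma etan_scale: assumes "c > 0" "x \<ge> 0" shows "etan (c * x) = c * etan x + x * etan c"
proof (cases "x = 0")
  case False
  hence "x > 0" using assms by auto
  hence "\<not> c * x \<le> 0" using assms mult_pos_pos[of c x] by linarith
  thus ?thesis using assms \<open>x > 0\<close> by (simp add: etan_def ln_mult algebra_simps)
qed (simp add: etan_def)

lemma idx_lt: assumes "i < (dA::nat)" "j < dB" shows "i * dB + j < dA * dB"
proof -
  have "Suc i * dB \<le> dA * dB" using assms by (intro mult_le_mono1) auto
  thus ?thesis using assms by simp
qed

definition Rm :: "nat \<Rightarrow> nat \<Rightarrow> complex vec \<Rightarrow> complex mat" where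
  "Rm dA dB v = Gm dA dB (\<lambda>i j. v $ (i * dB + j))"

lemma ptrace_outer: assumes "v \<in> carrier_vec (dA * dB)"
  shows "ptrace_B dA dB (complex_of_real c \<cdot>\<^sub>m outer v) = complex_of_real c \<cdot>\<^sub>m Rm dA dB v"
proof (rule eq_matI)
  fix i i' assume "i < dim_row (complex_of_real c \<cdot>\<^sub>m Rm dA dB v)" "i' < dim_col (complex_of_real c \<cdot>\<^sub>m Rm dA dB v)"
  hence i: "i < dA" "i' < dA" by (auto simp: Rm_def)
  have "ptrace_B dA dB (complex_of_real c \<cdot>\<^sub>m outer v) $$ (i,i') =
      (\<Sum>j<dB. complex_of_real c * (v $ (i * dB + j) * cnj (v $ (i' * dB + j))))"
    unfolding ptrace_B_def using i assms idx_lt[OF i(1)] idx_lt[OF i(2)]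
    by (auto simp: outer_def intro!: sum.cong)
  also have "\<dots> = (complex_of_real c \<cdot>\<^sub>m Rm dA dB v) $$ (i,i')"
    using i by (simp add: Rm_def Gm_def sum_distrib_left)
  finally show "ptrace_B dA dB (complex_of_real c \<cdot>\<^sub>m outer v) $$ (i,i') = (complex_of_real c \<cdot>\<^sub>m Rm dA dB v) $$ (i,i')" .
qed (auto simp: ptrace_B_def Rm_def)

lemma sum_shift_aux: "sum g {k..<k+b} = (\<Sum>j<(b::nat). g (k+j))"
  by (induct b) auto

lemma sum_split_prod: "(\<Sum>k<a*b. g k) = (\<Sum>i<a. \<Sum>j<(b::nat). g (i*b+j))"
proof -
  have "(\<Sum>k<a*b. g k) = (\<Sum>i<a. sum g {i*b..<i*b+b})" by (rule sum.nat_group[symmetric])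
  also have "\<dots> = (\<Sum>i<a. \<Sum>j<b. g (i*b+j))"
  proof -
    have "\<And>i. sum g {i*b..<i*b+b} = (\<Sum>j<b. g (i*b+j))" by (rule sum_shift_aux)
    thus ?thesis by simp
  qed
  finally show ?thesis .
qed

lemma Rm_trace: assumes v: "v \<in> carrier_vec (dA * dB)" and S: "spec dA (Rm dA dB v) U l"
  shows "(\<Sum>k<dA. l k) = vnorm2 v"
proof -
  have "complex_of_real (\<Sum>k<dA. l k) = (\<Sum>i<dA. Rm dA dB v $$ (i,i))" using spec_trace[OF S] by simp
  also have "\<dots> = (\<Sum>i<dA. complex_of_real (\<Sum>j<dB. (cmod (v $ (i*dB+j)))\<^sup>2))"
    by (intro sum.cong refl, simp add: Rm_def Gm_def cnorm_sq del: of_real_power)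
  also have "\<dots> = complex_of_real (vnorm2 v)"
    unfolding vnorm2_def using v by (simp add: sum_split_prod)
  finally show ?thesis using of_real_eq_iff by blast
qed

lemma Rm_spec: "\<exists>U l. spec dA (Rm dA dB v) U l \<and> (\<forall>k<dA. l k \<ge> 0)"
  unfolding Rm_def by (rule psd_spec[OF Gm_carrier Gm_herm Gm_qf])

lemma pair_id:
  fixes al be ga de x y x' y' :: complex
  assumes c1: "al * cnj be + ga * cnj de = 0"
  shows "(al * x + be * y) * cnj (al * x' + be * y') + (ga * x + de * y) * cnj (ga * x' + de * y')
    = (al * cnj al + ga * cnj ga) * (x * cnj x') + (be * cnj be + de * cnj de) * (y * cnj y')"
proof -
  have c2: "be * cnj al + de * cnj ga = 0" using arg_cong[OF c1, of cnj] by (simp add: mult.commute)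
  have "(al * x + be * y) * cnj (al * x' + be * y') + (ga * x + de * y) * cnj (ga * x' + de * y')
    = (al * cnj al + ga * cnj ga) * (x * cnj x') + (be * cnj be + de * cnj de) * (y * cnj y')
      + (al * cnj be + ga * cnj de) * (x * cnj y') + (be * cnj al + de * cnj ga) * (y * cnj x')"
    by (simp add: algebra_simps)
  thus ?thesis using c1 c2 by simp
qed

lemma Rm_id:
  assumes P: "P \<in> carrier_vec (dA * dB)" and F: "F \<in> carrier_vec (dA * dB)"
    and c1: "al * cnj be + ga * cnj de = 0"
    and ca: "al * cnj al + ga * cnj ga = complex_of_real a"
    and cb: "be * cnj be + de * cnj de = complex_of_real b"
  shows "Rm dA dB (al \<cdot>\<^sub>v P + be \<cdot>\<^sub>v F) + Rm dA dB (ga \<cdot>\<^sub>v P + de \<cdot>\<^sub>v F)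
    = complex_of_real a \<cdot>\<^sub>m Rm dA dB P + complex_of_real b \<cdot>\<^sub>m Rm dA dB F"
proof (rule eq_matI)
  fix i i' assume "i < dim_row (complex_of_real a \<cdot>\<^sub>m Rm dA dB P + complex_of_real b \<cdot>\<^sub>m Rm dA dB F)"
    "i' < dim_col (complex_of_real a \<cdot>\<^sub>m Rm dA dB P + complex_of_real b \<cdot>\<^sub>m Rm dA dB F)"
  hence i: "i < dA" "i' < dA" by (auto simp: Rm_def)
  have e: "\<And>j. j < dB \<Longrightarrow> (al \<cdot>\<^sub>v P + be \<cdot>\<^sub>v F) $ (i*dB+j) = al * P $ (i*dB+j) + be * F $ (i*dB+j)
     \<and> (al \<cdot>\<^sub>v P + be \<cdot>\<^sub>v F) $ (i'*dB+j) = al * P $ (i'*dB+j) + be * F $ (i'*dB+j)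
     \<and> (ga \<cdot>\<^sub>v P + de \<cdot>\<^sub>v F) $ (i*dB+j) = ga * P $ (i*dB+j) + de * F $ (i*dB+j)
     \<and> (ga \<cdot>\<^sub>v P + de \<cdot>\<^sub>v F) $ (i'*dB+j) = ga * P $ (i'*dB+j) + de * F $ (i'*dB+j)"
    using idx_lt[OF i(1)] idx_lt[OF i(2)] P F by auto
  define x where "x j = P $ (i*dB+j)" for j
  define x' where "x' j = P $ (i'*dB+j)" for j
  define y where "y j = F $ (i*dB+j)" for j
  define y' where "y' j = F $ (i'*dB+j)" for j
  have L: "(Rm dA dB (al \<cdot>\<^sub>v P + be \<cdot>\<^sub>v F) + Rm dA dB (ga \<cdot>\<^sub>v P + de \<cdot>\<^sub>v F)) $$ (i, i')
     = (\<Sum>j<dB. (al \<cdot>\<^sub>v P + be \<cdot>\<^sub>v F) $ (i*dB+j) * cnj ((al \<cdot>\<^sub>v P + be \<cdot>\<^sub>v F) $ (i'*dB+j)))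
     + (\<Sum>j<dB. (ga \<cdot>\<^sub>v P + de \<cdot>\<^sub>v F) $ (i*dB+j) * cnj ((ga \<cdot>\<^sub>v P + de \<cdot>\<^sub>v F) $ (i'*dB+j)))"
    using i unfolding Rm_def Gm_def by simp
  also have "\<dots> = (\<Sum>j<dB. (al * x j + be * y j) * cnj (al * x' j + be * y' j))
     + (\<Sum>j<dB. (ga * x j + de * y j) * cnj (ga * x' j + de * y' j))"
    unfolding x_def x'_def y_def y'_def by (intro arg_cong2[where f = "(+)"] sum.cong refl, insert e, auto)
  also have "\<dots> = (\<Sum>j<dB. (al * x j + be * y j) * cnj (al * x' j + be * y' j)
     + (ga * x j + de * y j) * cnj (ga * x' j + de * y' j))"
    by (rule sum.distrib[symmetric])
  also have "\<dots> = (\<Sum>j<dB. complex_of_real a * (x j * cnj (x' j)) + complex_of_real b * (y j * cnj (y' j)))"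
    by (intro sum.cong refl, simp only: pair_id[OF c1] ca cb)
  also have "\<dots> = complex_of_real a * (\<Sum>j<dB. x j * cnj (x' j)) + complex_of_real b * (\<Sum>j<dB. y j * cnj (y' j))"
    by (simp only: sum.distrib sum_distrib_left)
  also have "\<dots> = (complex_of_real a \<cdot>\<^sub>m Rm dA dB P + complex_of_real b \<cdot>\<^sub>m Rm dA dB F) $$ (i, i')"
    using i unfolding Rm_def Gm_def x_def x'_def y_def y'_def by simp
  finally show "(Rm dA dB (al \<cdot>\<^sub>v P + be \<cdot>\<^sub>v F) + Rm dA dB (ga \<cdot>\<^sub>v P + de \<cdot>\<^sub>v F)) $$ (i, i') =
    (complex_of_real a \<cdot>\<^sub>m Rm dA dB P + complex_of_real b \<cdot>\<^sub>m Rm dA dB F) $$ (i, i')" .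
qed (auto simp: Rm_def)



lemma ent_Rm: assumes "v \<in> carrier_vec (dA * dB)"
  shows "ent dA dB v = vn_entropy (complex_of_real (1 / vnorm2 v) \<cdot>\<^sub>m Rm dA dB v)"
  unfolding ent_def ptrace_outer[OF assms] ..

lemma vnorm2_pos: assumes "v \<in> carrier_vec n" "v \<noteq> 0\<^sub>v n" shows "vnorm2 v > 0"
proof -
  have "vnorm2 v \<ge> 0" unfolding vnorm2_def by (auto intro: sum_nonneg)
  moreover have "vnorm2 v \<noteq> 0"
  proof
    assume "vnorm2 v = 0"
    hence "\<forall>k\<in>{..<dim_vec v}. (cmod (v $ k))\<^sup>2 = 0"
      unfolding vnorm2_def by (subst sum_nonneg_eq_0_iff[symmetric]) auto
    hence "v = 0\<^sub>v n" using assms(1) by (intro eq_vecI) auto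
    thus False using assms(2) by simp
  qed
  ultimately show ?thesis by simp
qed

lemma main_ineq:
  fixes P F :: "complex vec" and al be ga de :: complex and a b :: real
  assumes P: "P \<in> carrier_vec (dA * dB)" and F: "F \<in> carrier_vec (dA * dB)"
    and nP: "vnorm2 P = 1" and nF: "vnorm2 F = 1"
    and c1: "al * cnj be + ga * cnj de = 0"
    and ca: "al * cnj al + ga * cnj ga = complex_of_real a"
    and cb: "be * cnj be + de * cnj de = complex_of_real b"
    and a: "a > 0" and b: "b > 0"
    and G: "al \<cdot>\<^sub>v P + be \<cdot>\<^sub>v F \<noteq> 0\<^sub>v (dA * dB)"
  shows "vnorm2 (al \<cdot>\<^sub>v P + be \<cdot>\<^sub>v F) * ent dA dB (al \<cdot>\<^sub>v P + be \<cdot>\<^sub>v F)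
    \<le> a * ent dA dB P + b * ent dA dB F + (eta2 (a + b) - eta2 a - eta2 b)"
proof -
  define Gm1 where "Gm1 = al \<cdot>\<^sub>v P + be \<cdot>\<^sub>v F"
  define Gm2 where "Gm2 = ga \<cdot>\<^sub>v P + de \<cdot>\<^sub>v F"
  have G1c: "Gm1 \<in> carrier_vec (dA * dB)" and G2c: "Gm2 \<in> carrier_vec (dA * dB)"
    unfolding Gm1_def Gm2_def using P F by auto
  define n where "n = vnorm2 Gm1"
  have np: "n > 0" unfolding n_def Gm1_def by (rule vnorm2_pos[OF _ G], insert P F, auto)
  obtain U1 l1 where S1: "spec dA (Rm dA dB Gm1) U1 l1" and l1: "\<forall>k<dA. l1 k \<ge> 0" using Rm_spec by blast
  obtain U2 l2 where S2: "spec dA (Rm dA dB Gm2) U2 l2" and l2: "\<forall>k<dA. l2 k \<ge> 0" using Rm_spec by blast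
  obtain U3 l3 where S3: "spec dA (Rm dA dB P) U3 l3" and l3: "\<forall>k<dA. l3 k \<ge> 0" using Rm_spec by blast
  obtain U4 l4 where S4: "spec dA (Rm dA dB F) U4 l4" and l4: "\<forall>k<dA. l4 k \<ge> 0" using Rm_spec by blast
  define M where "M = Rm dA dB Gm1 + Rm dA dB Gm2"
  have R1c: "Rm dA dB Gm1 \<in> carrier_mat dA dA" and R2c: "Rm dA dB Gm2 \<in> carrier_mat dA dA"
    unfolding Rm_def by auto
  have Mc: "M \<in> carrier_mat dA dA" unfolding M_def using R1c R2c by auto
  have Mh: "adj M = M"
  proof -
    have "adj M = adj (Rm dA dB Gm1) + adj (Rm dA dB Gm2)" unfolding M_def
      by (rule eq_matI, insert R1c R2c, auto)
    thus ?thesis unfolding M_def Rm_def Gm_herm by simp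
  qed
  have Mp: "Re (qf dA M z) \<ge> 0" for z
    unfolding M_def qf_add[OF R1c R2c] using Gm_qf unfolding Rm_def by (simp add: add_nonneg_nonneg)
  obtain V m where SM: "spec dA M V m" and m: "\<forall>k<dA. m k \<ge> 0" using psd_spec[OF Mc Mh Mp] by blast
  have Mid: "M = complex_of_real a \<cdot>\<^sub>m Rm dA dB P + complex_of_real b \<cdot>\<^sub>m Rm dA dB F"
    unfolding M_def Gm1_def Gm2_def by (rule Rm_id[OF P F c1 ca cb])
  have Sa: "spec dA (complex_of_real a \<cdot>\<^sub>m Rm dA dB P) U3 (\<lambda>k. a * l3 k)" by (rule spec_scale[OF S3])
  have Sb: "spec dA (complex_of_real b \<cdot>\<^sub>m Rm dA dB F) U4 (\<lambda>k. b * l4 k)" by (rule spec_scale[OF S4])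
  have SM': "spec dA (complex_of_real a \<cdot>\<^sub>m Rm dA dB P + complex_of_real b \<cdot>\<^sub>m Rm dA dB F) V m"
    using SM unfolding Mid .
  have SM1: "spec dA (Rm dA dB Gm1 + Rm dA dB Gm2) V m" using SM unfolding M_def .
  have t1: "(\<Sum>k<dA. l1 k) = n" unfolding n_def by (rule Rm_trace[OF G1c S1])
  have t3: "(\<Sum>k<dA. l3 k) = 1" using Rm_trace[OF P S3] nP by simp
  have t4: "(\<Sum>k<dA. l4 k) = 1" using Rm_trace[OF F S4] nF by simp
  have conc: "(\<Sum>k<dA. etan (m k)) - etan ((\<Sum>k<dA. l1 k) + (\<Sum>k<dA. l2 k))
     \<le> ((\<Sum>k<dA. etan (l1 k)) - etan (\<Sum>k<dA. l1 k)) + ((\<Sum>k<dA. etan (l2 k)) - etan (\<Sum>k<dA. l2 k))"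
    by (rule concave_spec[OF S1 S2 SM1], insert l1 l2, auto)
  have se1: "(\<Sum>k<dA. m k) = (\<Sum>k<dA. l1 k) + (\<Sum>k<dA. l2 k)" by (rule spec_sum_eq[OF S1 S2 SM1])
  have se2: "(\<Sum>k<dA. m k) = (\<Sum>k<dA. a * l3 k) + (\<Sum>k<dA. b * l4 k)" by (rule spec_sum_eq[OF Sa Sb SM'])
  have se2': "(\<Sum>k<dA. m k) = a + b" using se2 t3 t4 by (simp add: sum_distrib_left[symmetric])
  have g0: "(\<Sum>k<dA. etan (l2 k)) \<le> etan (\<Sum>k<dA. l2 k)" by (rule etan_sum_le, insert l2, auto)
  have sub: "(\<Sum>k<dA. etan (a * l3 k)) + (\<Sum>k<dA. etan (b * l4 k)) \<le> (\<Sum>k<dA. etan (m k))"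
    by (rule subadd_spec[OF Sa Sb SM'], insert l3 l4 a b, auto)
  have sc3: "(\<Sum>k<dA. etan (a * l3 k)) = a * (\<Sum>k<dA. etan (l3 k)) + etan a"
  proof -
    have "(\<Sum>k<dA. etan (a * l3 k)) = (\<Sum>k<dA. a * etan (l3 k) + l3 k * etan a)"
      by (intro sum.cong refl, rule etan_scale, insert a l3, auto)
    also have "\<dots> = a * (\<Sum>k<dA. etan (l3 k)) + etan a"
      using t3 by (simp add: sum.distrib sum_distrib_left sum_distrib_right[symmetric])
    finally show ?thesis .
  qed
  have sc4: "(\<Sum>k<dA. etan (b * l4 k)) = b * (\<Sum>k<dA. etan (l4 k)) + etan b"
  proof -
    have "(\<Sum>k<dA. etan (b * l4 k)) = (\<Sum>k<dA. b * etan (l4 k) + l4 k * etan b)"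
      by (intro sum.cong refl, rule etan_scale, insert b l4, auto)
    also have "\<dots> = b * (\<Sum>k<dA. etan (l4 k)) + etan b"
      using t4 by (simp add: sum.distrib sum_distrib_left sum_distrib_right[symmetric])
    finally show ?thesis .
  qed
  have key: "etan n - (\<Sum>k<dA. etan (l1 k))
    \<le> etan (a + b) - (a * (\<Sum>k<dA. etan (l3 k)) + etan a) - (b * (\<Sum>k<dA. etan (l4 k)) + etan b)"
  proof -
    have e1: "etan ((\<Sum>k<dA. l1 k) + (\<Sum>k<dA. l2 k)) = etan (a + b)" using se1 se2' by simp
    have e2: "etan (\<Sum>k<dA. l1 k) = etan n" using t1 by simp
    show ?thesis using conc g0 sub sc3 sc4 unfolding e1 e2 by linarith
  qed
  have eP: "ent dA dB P = - (\<Sum>k<dA. etan (l3 k)) / ln 2"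
  proof -
    have "ent dA dB P = vn_entropy (complex_of_real 1 \<cdot>\<^sub>m Rm dA dB P)" using ent_Rm[OF P] nP by simp
    also have "\<dots> = - (\<Sum>k<dA. etan (1 * l3 k)) / ln 2"
      by (rule vn_spec[OF spec_scale[OF S3]], insert l3, auto)
    finally show ?thesis by simp
  qed
  have eF: "ent dA dB F = - (\<Sum>k<dA. etan (l4 k)) / ln 2"
  proof -
    have "ent dA dB F = vn_entropy (complex_of_real 1 \<cdot>\<^sub>m Rm dA dB F)" using ent_Rm[OF F] nF by simp
    also have "\<dots> = - (\<Sum>k<dA. etan (1 * l4 k)) / ln 2"
      by (rule vn_spec[OF spec_scale[OF S4]], insert l4, auto)
    finally show ?thesis by simp
  qed
  have eG: "n * ent dA dB Gm1 = (etan n - (\<Sum>k<dA. etan (l1 k))) / ln 2"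
  proof -
    have "ent dA dB Gm1 = vn_entropy (complex_of_real (1/n) \<cdot>\<^sub>m Rm dA dB Gm1)" using ent_Rm[OF G1c] n_def by simp
    also have "\<dots> = - (\<Sum>k<dA. etan (1/n * l1 k)) / ln 2"
      by (rule vn_spec[OF spec_scale[OF S1]], insert l1 np, auto)
    also have "(\<Sum>k<dA. etan (1/n * l1 k)) = (\<Sum>k<dA. 1/n * etan (l1 k) + l1 k * etan (1/n))"
      by (intro sum.cong refl, rule etan_scale, insert np l1, auto)
    also have "\<dots> = 1/n * (\<Sum>k<dA. etan (l1 k)) + n * etan (1/n)"
      using t1 by (simp add: sum.distrib sum_distrib_left sum_distrib_right[symmetric])
    also have "n * etan (1/n) = - ln n" using np by (simp add: etan_def ln_div)
    finally have "ent dA dB Gm1 = - (1/n * (\<Sum>k<dA. etan (l1 k)) - ln n) / ln 2" by simp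
    thus ?thesis using np by (simp add: etan_def field_simps)
  qed
  have "n * ent dA dB Gm1 \<le> (etan (a + b) - (a * (\<Sum>k<dA. etan (l3 k)) + etan a) - (b * (\<Sum>k<dA. etan (l4 k)) + etan b)) / ln 2"
    unfolding eG by (rule divide_right_mono[OF key], simp)
  also have "\<dots> = a * ent dA dB P + b * ent dA dB F + (eta2 (a + b) - eta2 a - eta2 b)"
    unfolding eP eF eta2_etan by (simp add: field_simps)
  finally show ?thesis unfolding n_def Gm1_def .
qed



lemma coeff_exists:
  fixes al be :: complex and t :: real
  assumes ab: "(cmod al)\<^sup>2 + (cmod be)\<^sup>2 = 1" and t0: "0 < t" and t1: "t < 1"
  defines "N \<equiv> (t * (cmod be)\<^sup>2 + (1 - t) * (cmod al)\<^sup>2) / (t * (1 - t))"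
  shows "\<exists>ga de. al * cnj be + ga * cnj de = 0 \<and> al * cnj al + ga * cnj ga = complex_of_real (N * t)
     \<and> be * cnj be + de * cnj de = complex_of_real (N * (1 - t))"
proof -
  define A where "A = (cmod al)\<^sup>2"
  define B where "B = (cmod be)\<^sup>2"
  have aa: "al * cnj al = complex_of_real A" unfolding A_def by (simp only: cnorm_sq)
  have bb: "be * cnj be = complex_of_real B" unfolding B_def by (simp only: cnorm_sq)
  have AB: "A + B = 1" using ab unfolding A_def B_def .
  have Nt: "N * t = (t * B + (1 - t) * A) / (1 - t)" unfolding N_def A_def B_def using t0 t1 by (simp add: field_simps)
  have N1t: "N * (1 - t) = (t * B + (1 - t) * A) / t" unfolding N_def A_def B_def using t0 t1 by (simp add: field_simps)
  consider "be = 0" | "al = 0" | "al \<noteq> 0 \<and> be \<noteq> 0" by blast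
  thus ?thesis
  proof cases
    case 1
    hence B0: "B = 0" and A1: "A = 1" using AB unfolding B_def by auto
    define de where "de = complex_of_real (sqrt (N * (1 - t)))"
    have "N * (1 - t) \<ge> 0" unfolding N1t using B0 A1 t0 t1 by simp
    hence "de * cnj de = complex_of_real (N * (1 - t))" unfolding de_def
      by (simp flip: of_real_mult)
    moreover have "N * t = 1" unfolding Nt B0 A1 using t1 by simp
    ultimately show ?thesis using 1 aa A1 by (intro exI[of _ 0] exI[of _ de]) simp
  next
    case 2
    hence A0: "A = 0" and B1: "B = 1" using AB unfolding A_def by auto
    define ga where "ga = complex_of_real (sqrt (N * t))"
    have "N * t \<ge> 0" unfolding Nt using A0 B1 t0 t1 by simp
    hence "ga * cnj ga = complex_of_real (N * t)" unfolding ga_def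
      by (simp flip: of_real_mult)
    moreover have "N * (1 - t) = 1" unfolding N1t A0 B1 using t0 by simp
    ultimately show ?thesis using 2 bb B1 by (intro exI[of _ ga] exI[of _ 0]) simp
  next
    case 3
    hence Ap: "A > 0" and Bp: "B > 0" unfolding A_def B_def by auto
    define c where "c = sqrt (t * B / ((1 - t) * A))"
    have cc: "c * c = t * B / ((1 - t) * A)" unfolding c_def using Ap Bp t0 t1
      by (simp flip: power2_eq_square)
    have cp: "c > 0" unfolding c_def using Ap Bp t0 t1 by simp
    define ga where "ga = complex_of_real c * al"
    define de where "de = - be / complex_of_real c"
    have e1: "al * cnj be + ga * cnj de = 0" unfolding ga_def de_def using cp by simp
    have "ga * cnj ga = complex_of_real (c * c) * (al * cnj al)" unfolding ga_def by (simp add: mult_ac)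
    hence "al * cnj al + ga * cnj ga = complex_of_real (A + c * c * A)" unfolding aa by simp
    moreover have "A + c * c * A = N * t" unfolding Nt cc using Ap t0 t1 by (simp add: field_simps)
    ultimately have e2: "al * cnj al + ga * cnj ga = complex_of_real (N * t)" by simp
    have "de * cnj de = (be * cnj be) / complex_of_real (c * c)" unfolding de_def by (simp add: field_simps)
    hence "be * cnj be + de * cnj de = complex_of_real (B + B / (c * c))" unfolding bb by simp
    moreover have "B + B / (c * c) = N * (1 - t)" unfolding N1t cc using Ap Bp t0 t1 by (simp add: field_simps)
    ultimately have e3: "be * cnj be + de * cnj de = complex_of_real (N * (1 - t))" by simp
    show ?thesis using e1 e2 e3 by blast
  qed
qed

lemma rhs_eq:
  assumes N: "N > 0" and t0: "0 < t" and t1: "t < 1"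
  shows "(N * t) * EP + (N * (1 - t)) * EF + (eta2 (N * t + N * (1 - t)) - eta2 (N * t) - eta2 (N * (1 - t)))
    = N * (t * EP + (1 - t) * EF + h2 t)"
proof -
  have s: "N * t + N * (1 - t) = N" by (simp add: algebra_simps)
  have p1: "N * t > 0" and p2: "N * (1 - t) > 0" using N t0 t1 by auto
  have e0: "eta2 N = N * log 2 N" using N by (simp add: eta2_def)
  have q1: "\<not> N * t \<le> 0" using p1 by linarith
  have e1: "eta2 (N * t) = N * t * (log 2 N + log 2 t)"
    unfolding eta2_def if_not_P[OF q1] using N t0 by (simp add: log_mult)
  have q2: "\<not> N * (1 - t) \<le> 0" using p2 by linarith
  have e2: "eta2 (N * (1 - t)) = N * (1 - t) * (log 2 N + log 2 (1 - t))"
    unfolding eta2_def if_not_P[OF q2] using N t1 by (simp add: log_mult)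
  have "eta2 N - eta2 (N * t) - eta2 (N * (1 - t)) = N * h2 t"
    unfolding e0 e1 e2 h2_def by (simp add: algebra_simps)
  thus ?thesis unfolding s by (simp add: algebra_simps)
qed

theorem theorem3:
  fixes dA dB :: nat and \<Psi> \<Phi> :: "complex vec" and \<alpha> \<beta> :: complex and t :: real
  assumes "\<Psi> \<in> carrier_vec (dA * dB)" and "\<Phi> \<in> carrier_vec (dA * dB)"
    and "vnorm2 \<Psi> = 1" and "vnorm2 \<Phi> = 1"
    and "(cmod \<alpha>)\<^sup>2 + (cmod \<beta>)\<^sup>2 = 1"
    and "\<alpha> \<cdot>\<^sub>v \<Psi> + \<beta> \<cdot>\<^sub>v \<Phi> \<noteq> 0\<^sub>v (dA * dB)"
    and "0 < t" and "t < 1"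
  shows "vnorm2 (\<alpha> \<cdot>\<^sub>v \<Psi> + \<beta> \<cdot>\<^sub>v \<Phi>) * ent dA dB (\<alpha> \<cdot>\<^sub>v \<Psi> + \<beta> \<cdot>\<^sub>v \<Phi>)
     \<le> (t * (cmod \<beta>)\<^sup>2 + (1 - t) * (cmod \<alpha>)\<^sup>2) / (t * (1 - t))
        * (t * ent dA dB \<Psi> + (1 - t) * ent dA dB \<Phi> + h2 t)"
proof -
  define N where "N = (t * (cmod \<beta>)\<^sup>2 + (1 - t) * (cmod \<alpha>)\<^sup>2) / (t * (1 - t))"
  have num: "t * (cmod \<beta>)\<^sup>2 + (1 - t) * (cmod \<alpha>)\<^sup>2 > 0"
  proof (cases "cmod \<alpha> = 0")
    case True
    hence "(cmod \<beta>)\<^sup>2 = 1" using assms(5) by simp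
    thus ?thesis using True assms(7) by (simp del: norm_eq_zero)
  next
    case False
    hence "(cmod \<alpha>)\<^sup>2 > 0" by simp
    moreover have "t * (cmod \<beta>)\<^sup>2 \<ge> 0" using assms(7) by simp
    ultimately show ?thesis using assms(8) by (simp add: add_nonneg_pos)
  qed
  have tt: "t * (1 - t) > 0" using assms(7,8) by simp
  have Np: "N > 0" unfolding N_def by (rule divide_pos_pos[OF num tt])
  have ex: "\<exists>ga de. \<alpha> * cnj \<beta> + ga * cnj de = 0 \<and> \<alpha> * cnj \<alpha> + ga * cnj ga = complex_of_real (N * t)
     \<and> \<beta> * cnj \<beta> + de * cnj de = complex_of_real (N * (1 - t))"
    using coeff_exists[OF assms(5,7,8), folded N_def] .
  then obtain ga de where cs: "\<alpha> * cnj \<beta> + ga * cnj de = 0 \<and> \<alpha> * cnj \<alpha> + ga * cnj ga = complex_of_real (N * t)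
     \<and> \<beta> * cnj \<beta> + de * cnj de = complex_of_real (N * (1 - t))" by (elim exE)
  have c1: "\<alpha> * cnj \<beta> + ga * cnj de = 0" using cs by (rule conjunct1)
  have ca: "\<alpha> * cnj \<alpha> + ga * cnj ga = complex_of_real (N * t)" using cs by (rule conjunct1[OF conjunct2])
  have cb: "\<beta> * cnj \<beta> + de * cnj de = complex_of_real (N * (1 - t))" using cs by (rule conjunct2[OF conjunct2])
  have p1: "N * t > 0" using Np assms(7) by (rule mult_pos_pos)
  have p2: "N * (1 - t) > 0" using Np assms(8) by simp
  have "vnorm2 (\<alpha> \<cdot>\<^sub>v \<Psi> + \<beta> \<cdot>\<^sub>v \<Phi>) * ent dA dB (\<alpha> \<cdot>\<^sub>v \<Psi> + \<beta> \<cdot>\<^sub>v \<Phi>)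
     \<le> (N * t) * ent dA dB \<Psi> + (N * (1 - t)) * ent dA dB \<Phi>
       + (eta2 (N * t + N * (1 - t)) - eta2 (N * t) - eta2 (N * (1 - t)))"
    by (rule main_ineq[OF assms(1-4) c1 ca cb p1 p2 assms(6)])
  also have "\<dots> = N * (t * ent dA dB \<Psi> + (1 - t) * ent dA dB \<Phi> + h2 t)"
    by (rule rhs_eq[OF Np assms(7,8)])
  finally show ?thesis by (simp only: N_def)
qed


end
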